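(* Let $\Gamma,\Delta$ be finite multisets of S4 formulas and $A$ an S4 formula. Suppose $\mathcal T_L$ is a G3s proof of $\Gamma\supset\Delta,A$ and $\mathcal T_R$ is a G3s proof of $A,\Gamma\supset\Delta$, and let $\mathcal T$ be the G3s + (Cut) proof of $\Gamma\supset\Delta$ obtained by combining $\mathcal T_L$ and $\mathcal T_R$ with a final (Cut) rule. If $\mathcal T$ is prehistoric-cycle-free (with families and prehistoric relations computed in $\mathcal T$), then there is a prehistoric-cycle-free G3s proof of $\Gamma\supset\Delta$.
   Context: S4 formulas: $A ::= \bot \mid P \mid A_0\to A_1 \mid \Box A$ ($P$ atomic). Sequents $\Gamma\supset\Delta$ use finite multisets; $\Box\Gamma:=\{\Box C\mid C\in\Gamma\}$. G3s rules: (Ax) $P,\Gamma\supset\Delta,P$ ($P$ atomic); $(\bot\supset)$ $\bot,\Gamma\supset\Delta$; $(\to\supset)$ from $\Gamma\supset\Delta,A$ and $B,\Gamma\supset\Delta$ infer $A\to B,\Gamma\supset\Delta$; $(\supset\to)$ from $A,\Gamma\supset\Delta,B$ infer $\Gamma\supset\Delta,A\to B$; $(\Box\supset)$ from $A,\Box A,\Gamma\supset\Delta$ infer $\Box A,\Gamma\supset\Delta$; $(\supset\Box)$ from $\Box\Gamma\supset A$ infer $\Gamma',\Box\Gamma\supset\Delta',\Box A$. (Cut): from $\Gamma\supset\Delta,A$ and $A,\Gamma\supset\Delta$ infer $\Gamma\supset\Delta$. In a rule instance, formulas of $\Gamma,\Delta,\Box\Gamma$ repeated in premise(s) and conclusion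 are side formulas; $\Gamma',\Delta'$ (and $\Gamma,\Delta$ in axioms) are weakening formulas; the distinguished new formula of the conclusion is the principal formula and the distinguished formulas of the premises are active formulas. Correspondence between symbol occurrences of a proof tree: a symbol occurrence in a side formula of a premise directly corresponds to the same occurrence in the same side formula of the conclusion; an active formula of a premise directly corresponds to the topmost occurrence of that formula as a subformula of the principal formula (so in $(\Box\supset)$ the active $A$ corresponds to the immediate subformula $A$ of the principal $\Box A$ and the active $\Box A$ to the principal $\Box A$), and symbol occurrences inside it directly correspond to the same occurrences inside that subformula; in (Cut) the two active occurrences of the cut formula $A$ (and their symbol occurrences) correspond to each other. Correspondence is the reflexive, symmetric, transitive closure of direct correspondence. A family is an equivalence class of $\Box$-occurrences under correspondence. Family $i$ has a prehistoric relation to family $j$, written $i\prec j$, if there is a $(\supset\Box)$ rule whose principal formula $\Box A$ has its outermost $\Box$ in family $j$ and whose premise contains an occurrence of a $\Box$ belonging to family $i$ (families of any polarity are considered). A prehistoric cycle is a list of families $i_0,\dots,i_{n-1}$ ($n\ge1$) with $i_0\prec i_1\prec\cdots\prec i_{n-1}\prec i_0$; a proof is prehistoric-cycle-free if it has no prehistoric cycle. *)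

theory Defs
  imports "HOL-Library.Multiset"
begin

datatype 'a fm = Bot | At 'a | Imp "'a fm" "'a fm" | Box "'a fm"

text \<open>Positions of formulas in the lists are used
  to make the matching of formula occurrences between premise and conclusion explicit.\<close>

type_synonym 'a seq = "'a fm list \<times> 'a fm list"

definition seq_mset :: "'a seq \<Rightarrow> 'a fm multiset \<times> 'a fm multiset" where
  "seq_mset s = (mset (fst s), mset (snd s))"

definition ins :: "nat \<Rightarrow> 'b \<Rightarrow> 'b list \<Rightarrow> 'b list" where
  "ins j x xs = take j xs @ x # drop j xs"

definition del :: "nat \<Rightarrow> 'b list \<Rightarrow> 'b list" where
  "del i xs = take i xs @ drop (Suc i) xs"

text \<open>index in (del i xs) \<mapsto> index in xs\<close>
definition undel :: "nat \<Rightarrow> nat \<Rightarrow> nat" where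
  "undel i p = (if p < i then p else Suc p)"

text \<open>index (different from j) in (ins j x xs) \<mapsto> index in xs\<close>
definition unins :: "nat \<Rightarrow> nat \<Rightarrow> nat" where
  "unins j p = (if p < j then p else p - 1)"

fun is_atom :: "'a fm \<Rightarrow> bool" where
  "is_atom (At _) = True" | "is_atom _ = False"

fun is_box :: "'a fm \<Rightarrow> bool" where
  "is_box (Box _) = True" | "is_box _ = False"

section \<open>G3s (+ Cut) proof trees\<close>

text \<open>Rule instances, with positional parameters:
  Ax i j: antecedent position i and succedent position j carry the same atom;
  BotL i: antecedent position i is Bot;
  ImpL i j k: principal at antecedent position i; active A inserted at succedent position j
    of premise 1, active B inserted at antecedent position k of premise 2;
  ImpR i j k: principal at succedent position i; active A inserted at antecedent position j,
    active B inserted at succedent position k;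
  BoxL i j k: principal Box A at antecedent position i; premise antecedent is
    ins j A (ins k (Box A) (del i L));
  BoxR ss i: principal Box A at succedent position i; ss lists the (distinct) antecedent
    positions forming Box Gamma, premise is (map (nth L) ss, [A]);
  Cut A j k: premises (L, ins j A R) and (ins k A L, R).\<close>

datatype 'a rule = Ax nat nat | BotL nat | ImpL nat nat nat | ImpR nat nat nat
  | BoxL nat nat nat | BoxR "nat list" nat | Cut "'a fm" nat nat

datatype 'a ptree = Node "'a rule" "'a seq" "'a ptree list"

fun concl :: "'a ptree \<Rightarrow> 'a seq" where
  "concl (Node r s cs) = s"

fun is_cut :: "'a rule \<Rightarrow> bool" where
  "is_cut (Cut _ _ _) = True" | "is_cut _ = False"

fun step_ok :: "'a rule \<Rightarrow> 'a seq \<Rightarrow> 'a seq list \<Rightarrow> bool" where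
  "step_ok (Ax i j) (L, R) ps =
     (ps = [] \<and> i < length L \<and> j < length R \<and> L ! i = R ! j \<and> is_atom (L ! i))"
| "step_ok (BotL i) (L, R) ps = (ps = [] \<and> i < length L \<and> L ! i = Bot)"
| "step_ok (ImpL i j k) (L, R) ps =
     (i < length L \<and> j \<le> length R \<and> k < length L \<and>
      (\<exists>A B. L ! i = Imp A B \<and>
         ps = [(del i L, ins j A R), (ins k B (del i L), R)]))"
| "step_ok (ImpR i j k) (L, R) ps =
     (i < length R \<and> j \<le> length L \<and> k < length R \<and>
      (\<exists>A B. R ! i = Imp A B \<and> ps = [(ins j A L, ins k B (del i R))]))"
| "step_ok (BoxL i j k) (L, R) ps =
     (i < length L \<and> k < length L \<and> j \<le> length L \<and>
      (\<exists>A. L ! i = Box A \<and> ps = [(ins j A (ins k (Box A) (del i L)), R)]))"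
| "step_ok (BoxR ss i) (L, R) ps =
     (i < length R \<and> distinct ss \<and> (\<forall>s\<in>set ss. s < length L \<and> is_box (L ! s)) \<and>
      (\<exists>A. R ! i = Box A \<and> ps = [(map (nth L) ss, [A])]))"
| "step_ok (Cut A j k) (L, R) ps =
     (j \<le> length R \<and> k \<le> length L \<and> ps = [(L, ins j A R), (ins k A L, R)])"

fun valid :: "bool \<Rightarrow> 'a ptree \<Rightarrow> bool" where
  "valid c (Node r s cs) =
     ((c \<or> \<not> is_cut r) \<and> step_ok r s (map concl cs) \<and> list_all (valid c) cs)"

section \<open>Symbol occurrences and correspondence\<close>

text \<open>Node addresses are paths from the root (a @ [c] is the c-th premise of node a).
  A symbol occurrence is (node address, side, formula index, position in formula);
  side False = antecedent, True = succedent; position [] is the outermost symbol,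
  0 # q / 1 # q go into the left / right argument of Imp, 0 # q into the argument of Box.\<close>

type_synonym occ = "nat list \<times> bool \<times> nat \<times> nat list"

fun subtree :: "'a ptree \<Rightarrow> nat list \<Rightarrow> 'a ptree option" where
  "subtree t [] = Some t"
| "subtree (Node r s cs) (c # a) = (if c < length cs then subtree (cs ! c) a else None)"

fun subfm :: "'a fm \<Rightarrow> nat list \<Rightarrow> 'a fm option" where
  "subfm A [] = Some A"
| "subfm (Imp A B) (n # q) = (if n = 0 then subfm A q else if n = 1 then subfm B q else None)"
| "subfm (Box A) (n # q) = (if n = 0 then subfm A q else None)"
| "subfm _ _ = None"

definition seq_fm :: "'a seq \<Rightarrow> bool \<Rightarrow> nat \<Rightarrow> 'a fm option" where
  "seq_fm s side i = (let xs = (if side then snd s else fst s) in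
                        if i < length xs then Some (xs ! i) else None)"

definition fm_at :: "'a ptree \<Rightarrow> occ \<Rightarrow> 'a fm option" where
  "fm_at T oc = (case oc of (a, side, i, q) \<Rightarrow>
     (case subtree T a of None \<Rightarrow> None
      | Some t \<Rightarrow> (case seq_fm (concl t) side i of None \<Rightarrow> None
                   | Some B \<Rightarrow> subfm B q)))"

definition is_occ :: "'a ptree \<Rightarrow> occ \<Rightarrow> bool" where
  "is_occ T oc = (fm_at T oc \<noteq> None)"

definition box_occ :: "'a ptree \<Rightarrow> occ \<Rightarrow> bool" where
  "box_occ T oc = (\<exists>B. fm_at T oc = Some (Box B))"

text \<open>up r c side p: the formula at (side, p) of premise c of rule instance r corresponds
  to the formula at (side', p') of the conclusion, with its symbols placed below position
  prefix pre: Some (side', p', pre). Side formulas have pre = []; active formulas point to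
  their topmost occurrence as a subformula of the principal formula. None for the active
  cut formulas (handled separately) and non-existent premises.\<close>

fun up :: "'a rule \<Rightarrow> nat \<Rightarrow> bool \<Rightarrow> nat \<Rightarrow> (bool \<times> nat \<times> nat list) option" where
  "up (ImpL i j k) c side p =
     (if c = 0 then
        (if \<not> side then Some (False, undel i p, [])
         else if p = j then Some (False, i, [0]) else Some (True, unins j p, []))
      else if c = 1 then
        (if \<not> side then (if p = k then Some (False, i, [1]) else Some (False, undel i (unins k p), []))
         else Some (True, p, []))
      else None)"
| "up (ImpR i j k) c side p =
     (if c = 0 then
        (if \<not> side then (if p = j then Some (True, i, [0]) else Some (False, unins j p, []))
         else if p = k then Some (True, i, [1]) else Some (True, undel i (unins k p), []))
      else None)"
| "up (BoxL i j k) c side p =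
     (if c = 0 then
        (if \<not> side then
           (if p = j then Some (False, i, [0])
            else if unins j p = k then Some (False, i, [])
            else Some (False, undel i (unins k (unins j p)), []))
         else Some (True, p, []))
      else None)"
| "up (BoxR ss i) c side p =
     (if c = 0 then
        (if \<not> side then (if p < length ss then Some (False, ss ! p, []) else None)
         else Some (True, i, [0]))
      else None)"
| "up (Cut A j k) c side p =
     (if c = 0 then
        (if \<not> side then Some (False, p, [])
         else if p = j then None else Some (True, unins j p, []))
      else if c = 1 then
        (if \<not> side then (if p = k then None else Some (False, unins k p, []))
         else Some (True, p, []))
      else None)"
| "up _ _ _ _ = None"

definition dcorr :: "'a ptree \<Rightarrow> occ \<Rightarrow> occ \<Rightarrow> bool" where
  "dcorr T o1 o2 \<longleftrightarrow> is_occ T o1 \<and> is_occ T o2 \<and>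
     ((\<exists>a c side p q r s cs side' p' pre.
         subtree T a = Some (Node r s cs) \<and> c < length cs \<and>
         o1 = (a @ [c], side, p, q) \<and> up r c side p = Some (side', p', pre) \<and>
         o2 = (a, side', p', pre @ q))
    \<or> (\<exists>a A j k s cs q.
         subtree T a = Some (Node (Cut A j k) s cs) \<and> length cs = 2 \<and>
         o1 = (a @ [0], True, j, q) \<and> o2 = (a @ [1], False, k, q)))"

definition corr :: "'a ptree \<Rightarrow> occ \<Rightarrow> occ \<Rightarrow> bool" where
  "corr T = (\<lambda>o1 o2. dcorr T o1 o2 \<or> dcorr T o2 o1)\<^sup>*\<^sup>*"

definition family :: "'a ptree \<Rightarrow> occ \<Rightarrow> occ set" where
  "family T oc = {o'. box_occ T o' \<and> corr T oc o'}"

definition families :: "'a ptree \<Rightarrow> occ set set" where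
  "families T = {family T oc | oc. box_occ T oc}"

definition prehist :: "'a ptree \<Rightarrow> occ set \<Rightarrow> occ set \<Rightarrow> bool" where
  "prehist T F G \<longleftrightarrow> F \<in> families T \<and> G \<in> families T \<and>
     (\<exists>a ss i s cs oc. subtree T a = Some (Node (BoxR ss i) s cs) \<and>
        (a, True, i, []) \<in> G \<and> box_occ T oc \<and> fst oc = a @ [0] \<and> oc \<in> F)"

definition prehist_cycle_free :: "'a ptree \<Rightarrow> bool" where
  "prehist_cycle_free T \<longleftrightarrow>
     \<not> (\<exists>fs. fs \<noteq> [] \<and>
          (\<forall>n < length fs. prehist T (fs ! n) (fs ! ((n + 1) mod length fs))))"

end

theory Submission
  imports Defs
begin


datatype ('a,'l) lfm = LBot | LAt 'a | LImp "('a,'l) lfm" "('a,'l) lfm" | LBox 'l "('a,'l) lfm"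

fun labs :: "('a,'l) lfm \<Rightarrow> 'l set" where
  "labs (LImp A B) = labs A \<union> labs B"
| "labs (LBox l A) = insert l (labs A)"
| "labs _ = {}"

fun is_lbox :: "('a,'l) lfm \<Rightarrow> bool" where
  "is_lbox (LBox _ _) = True" | "is_lbox _ = False"

inductive hder :: "('l \<Rightarrow> 'l \<Rightarrow> bool) \<Rightarrow> nat \<Rightarrow> ('a,'l) lfm multiset \<Rightarrow> ('a,'l) lfm multiset \<Rightarrow> bool"
  for rel where
  hax: "LAt P \<in># G \<Longrightarrow> LAt P \<in># D \<Longrightarrow> hder rel n G D"
| hbot: "LBot \<in># G \<Longrightarrow> hder rel n G D"
| himpL: "hder rel n G (add_mset A D) \<Longrightarrow> hder rel n (add_mset B G) D \<Longrightarrow> hder rel (Suc n) (add_mset (LImp A B) G) D"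
| himpR: "hder rel n (add_mset A G) (add_mset B D) \<Longrightarrow> hder rel (Suc n) G (add_mset (LImp A B) D)"
| hboxL: "hder rel n (add_mset A (add_mset (LBox l A) G)) D \<Longrightarrow> hder rel (Suc n) (add_mset (LBox l A) G) D"
| hboxR: "hder rel n B {#A#} \<Longrightarrow> \<forall>x\<in>#B. is_lbox x \<Longrightarrow> \<forall>x\<in>#add_mset A B. \<forall>m\<in>labs x. rel m l
    \<Longrightarrow> hder rel (Suc n) (G + B) (add_mset (LBox l A) D)"

lemma hder_mono: "hder rel n G D \<Longrightarrow> n \<le> m \<Longrightarrow> hder rel m G D"
proof (induction arbitrary: m rule: hder.induct)
  case (hax P G D n) then show ?case by (blast intro: hder.hax)
next
  case (hbot G n D) then show ?case by (blast intro: hder.hbot)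
next
  case (himpL n G A D B)
  then obtain m' where "m = Suc m'" "n \<le> m'" by (cases m) auto
  then show ?case using himpL by (auto intro: hder.himpL)
next
  case (himpR n A G B D)
  then obtain m' where "m = Suc m'" "n \<le> m'" by (cases m) auto
  then show ?case using himpR by (auto intro: hder.himpR)
next
  case (hboxL n A l G D)
  then obtain m' where "m = Suc m'" "n \<le> m'" by (cases m) auto
  then show ?case using hboxL by (auto intro: hder.hboxL)
next
  case (hboxR n B A l G D)
  then obtain m' where m: "m = Suc m'" "n \<le> m'" by (cases m) auto
  then have "hder rel m' B {#A#}" using hboxR by auto
  from hder.hboxR[OF this hboxR(2,3)] show ?case using m by simp
qed

lemma hder_weak: "hder rel n G D \<Longrightarrow> hder rel n (G + G') (D + D')"
proof (induction arbitrary: G' D' rule: hder.induct)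
  case (hax P G D n) then show ?case by (auto intro: hder.hax)
next
  case (hbot G n D) then show ?case by (auto intro: hder.hbot)
next
  case (himpL n G A D B)
  show ?case using himpL.IH[of G' D'] himpL.IH(2)[of G' D'] hder.himpL by fastforce
next
  case (himpR n A G B D)
  show ?case using himpR.IH[of G' D'] hder.himpR by fastforce
next
  case (hboxL n A l G D)
  show ?case using hboxL.IH[of G' D'] hder.hboxL by fastforce
next
  case (hboxR n B A l G D)
  have "hder rel (Suc n) ((G + G') + B) (add_mset (LBox l A) (D + D'))"
    by (rule hder.hboxR[OF hboxR(1-3)])
  then show ?case by (simp add: ac_simps)
qed

lemma hder_weak1: "hder rel n G D \<Longrightarrow> hder rel n (add_mset X G) D"
  using hder_weak[of rel n G D "{#X#}" "{#}"] by simp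
lemma hder_weak2: "hder rel n G D \<Longrightarrow> hder rel n G (add_mset X D)"
  using hder_weak[of rel n G D "{#}" "{#X#}"] by simp
lemma hder_weak_sub: "hder rel n G D \<Longrightarrow> G \<subseteq># G' \<Longrightarrow> hder rel n G' D"
  using hder_weak[of rel n G D "G' - G" "{#}"] by (simp add: subset_mset.add_diff_inverse)

lemma inv_impL: "hder rel n G D \<Longrightarrow> LImp A B \<in># G \<Longrightarrow>
   hder rel n (G - {#LImp A B#}) (add_mset A D) \<and> hder rel n (add_mset B (G - {#LImp A B#})) D"
proof (induction rule: hder.induct)
  case (hax P G D n)
  then have "LAt P \<in># G - {#LImp A B#}" by (simp add: in_diff_count)
  then show ?case using hax by (auto intro: hder.hax)
next
  case (hbot G n D)
  then have "LBot \<in># G - {#LImp A B#}" by (simp add: in_diff_count)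
  then show ?case by (auto intro: hder.hbot)
next
  case (himpL n G X D Y)
  show ?case
  proof (cases "LImp A B = LImp X Y")
    case True
    then show ?thesis using hder_mono[OF himpL(1), of "Suc n"] hder_mono[OF himpL(2), of "Suc n"] by auto
  next
    case False
    then have m: "LImp A B \<in># G" using himpL(5) by auto
    have e1: "add_mset (LImp X Y) G - {#LImp A B#} = add_mset (LImp X Y) (G - {#LImp A B#})"
      using m by (simp add: diff_union_swap2)
    have e2: "add_mset Y G - {#LImp A B#} = add_mset Y (G - {#LImp A B#})"
      using m by (simp add: diff_union_swap2)
    have i1: "hder rel n (G - {#LImp A B#}) (add_mset X (add_mset A D))"
      using himpL.IH(1)[OF m] by (simp add: add_mset_commute)
    have i2: "hder rel n (add_mset B (G - {#LImp A B#})) (add_mset X D)"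
      using himpL.IH(1)[OF m] by simp
    have i3: "hder rel n (add_mset Y (G - {#LImp A B#})) (add_mset A D)"
      using himpL.IH(2) m e2 by simp
    have i4: "hder rel n (add_mset Y (add_mset B (G - {#LImp A B#}))) D"
      using himpL.IH(2) m e2 by (simp add: add_mset_commute)
    show ?thesis unfolding e1
      using hder.himpL[OF i1 i3] hder.himpL[OF i2 i4] by (simp add: add_mset_commute)
  qed
next
  case (himpR n X G Y D)
  have m: "LImp A B \<in># add_mset X G" using himpR by simp
  have e: "add_mset X G - {#LImp A B#} = add_mset X (G - {#LImp A B#})"
    using himpR(3) by (simp add: diff_union_swap2)
  have "hder rel n (add_mset X (G - {#LImp A B#})) (add_mset Y (add_mset A D))"
    "hder rel n (add_mset X (add_mset B (G - {#LImp A B#}))) (add_mset Y D)"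
    using himpR.IH[OF m] unfolding e by (auto simp: add_mset_commute)
  from hder.himpR[OF this(1)] hder.himpR[OF this(2)] show ?case by (simp add: add_mset_commute)
next
  case (hboxL n X l G D)
  have ne: "LBox l X \<noteq> LImp A B" by simp
  have m: "LImp A B \<in># add_mset X (add_mset (LBox l X) G)" using hboxL by simp
  have m': "LImp A B \<in># G" using hboxL(3) by simp
  have e: "add_mset X (add_mset (LBox l X) G) - {#LImp A B#} = add_mset X (add_mset (LBox l X) (G - {#LImp A B#}))"
    using m' by (simp add: diff_union_swap2)
  have e2: "add_mset (LBox l X) G - {#LImp A B#} = add_mset (LBox l X) (G - {#LImp A B#})"
    using m' by (simp add: diff_union_swap2)
  have "hder rel n (add_mset X (add_mset (LBox l X) (G - {#LImp A B#}))) (add_mset A D)"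
    "hder rel n (add_mset X (add_mset (LBox l X) (add_mset B (G - {#LImp A B#})))) D"
    using hboxL.IH[OF m] unfolding e by (auto simp: add_mset_commute)
  from hder.hboxL[OF this(1)] hder.hboxL[OF this(2)] show ?case unfolding e2 by (simp add: add_mset_commute)
next
  case (hboxR n Bx X l G D)
  have "LImp A B \<notin># Bx" using hboxR(2) by fastforce
  then have m': "LImp A B \<in># G" using hboxR(5) by simp
  have e: "G + Bx - {#LImp A B#} = (G - {#LImp A B#}) + Bx" using m' by (simp add: diff_union_swap2)
  show ?case unfolding e
    using hder.hboxR[OF hboxR(1-3), of "G - {#LImp A B#}" "add_mset A D"]
      hder.hboxR[OF hboxR(1-3), of "add_mset B (G - {#LImp A B#})" D]
    by (auto simp: add_mset_commute)
qed

lemma inv_impR: "hder rel n G D \<Longrightarrow> LImp A B \<in># D \<Longrightarrow>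
   hder rel n (add_mset A G) (add_mset B (D - {#LImp A B#}))"
proof (induction rule: hder.induct)
  case (hax P G D n)
  then have "LAt P \<in># D - {#LImp A B#}" by (simp add: in_diff_count)
  then show ?case using hax by (auto intro: hder.hax)
next
  case (hbot G n D) then show ?case by (auto intro: hder.hbot)
next
  case (himpL n G X D Y)
  have e: "add_mset X D - {#LImp A B#} = add_mset X (D - {#LImp A B#})"
    using himpL(5) by (simp add: diff_union_swap2)
  have "hder rel n (add_mset A G) (add_mset X (add_mset B (D - {#LImp A B#})))"
    "hder rel n (add_mset Y (add_mset A G)) (add_mset B (D - {#LImp A B#}))"
    using himpL.IH himpL(5) e by (auto simp: add_mset_commute)
  from hder.himpL[OF this] show ?case by (simp add: add_mset_commute)
next
  case (himpR n X G Y D)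
  show ?case
  proof (cases "LImp A B = LImp X Y")
    case True
    then show ?thesis using hder_mono[OF himpR(1), of "Suc n"] by auto
  next
    case False
    then have m: "LImp A B \<in># D" using himpR(3) by auto
    have e1: "add_mset (LImp X Y) D - {#LImp A B#} = add_mset (LImp X Y) (D - {#LImp A B#})"
      using m by (simp add: diff_union_swap2)
    have e2: "add_mset Y D - {#LImp A B#} = add_mset Y (D - {#LImp A B#})"
      using m by (simp add: diff_union_swap2)
    have "hder rel n (add_mset X (add_mset A G)) (add_mset Y (add_mset B (D - {#LImp A B#})))"
      using himpR.IH m e2 by (simp add: add_mset_commute)
    from hder.himpR[OF this] show ?thesis unfolding e1 by (simp add: add_mset_commute)
  qed
next
  case (hboxL n X l G D)
  have "hder rel n (add_mset X (add_mset (LBox l X) (add_mset A G))) (add_mset B (D - {#LImp A B#}))"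
    using hboxL by (simp add: add_mset_commute)
  from hder.hboxL[OF this] show ?case by (simp add: add_mset_commute)
next
  case (hboxR n Bx X l G D)
  have m: "LImp A B \<in># D" using hboxR(5) by auto
  have e: "add_mset (LBox l X) D - {#LImp A B#} = add_mset (LBox l X) (D - {#LImp A B#})"
    using m by (simp add: diff_union_swap2)
  show ?case unfolding e
    using hder.hboxR[OF hboxR(1-3), of "add_mset A G" "add_mset B (D - {#LImp A B#})"]
    by (auto simp: add_mset_commute)
qed

lemma count2_add: "2 \<le> count G x \<Longrightarrow> 2 \<le> count (add_mset y G) x"
proof -
  have "count G x \<le> count (add_mset y G) x" by simp
  then show "2 \<le> count G x \<Longrightarrow> ?thesis" by linarith
qed

lemma contr_at: "hder rel n G D \<Longrightarrow> 2 \<le> count G (LAt P) \<Longrightarrow> hder rel n (G - {#LAt P#}) D"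
proof (induction rule: hder.induct)
  case (hax Q G D n)
  then have "LAt Q \<in># G - {#LAt P#}"
    by (cases "Q = P") (auto simp: in_diff_count)
  then show ?case using hax by (auto intro: hder.hax)
next
  case (hbot G n D)
  then have "LBot \<in># G - {#LAt P#}" by (simp add: in_diff_count)
  then show ?case by (auto intro: hder.hbot)
next
  case (himpL n G X D Y)
  have c: "2 \<le> count G (LAt P)" using himpL(5) by simp
  have "LAt P \<in># G" using c by (subst count_greater_zero_iff[symmetric]) linarith
  then have e: "add_mset (LImp X Y) G - {#LAt P#} = add_mset (LImp X Y) (G - {#LAt P#})"
    "add_mset Y G - {#LAt P#} = add_mset Y (G - {#LAt P#})"
    by (simp_all add: diff_union_swap2)
  have c2: "2 \<le> count (add_mset Y G) (LAt P)" proof -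
    have "count G (LAt P) \<le> count (add_mset Y G) (LAt P)" by simp
    then show ?thesis using c by linarith
  qed
  have "hder rel n (G - {#LAt P#}) (add_mset X D)" "hder rel n (add_mset Y (G - {#LAt P#})) D"
    using himpL.IH(1) c himpL.IH(2)[OF c2] e(2) by auto
  from hder.himpL[OF this] show ?case unfolding e(1) .
next
  case (himpR n X G Y D)
  have c: "2 \<le> count G (LAt P)" using himpR(3) by simp
  have "LAt P \<in># G" using c by (subst count_greater_zero_iff[symmetric]) linarith
  then have e: "add_mset X G - {#LAt P#} = add_mset X (G - {#LAt P#})" by (simp add: diff_union_swap2)
  have "hder rel n (add_mset X (G - {#LAt P#})) (add_mset Y D)" using himpR.IH[OF count2_add[OF c]] e by auto
  from hder.himpR[OF this] show ?case .
next
  case (hboxL n X l G D)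
  have c: "2 \<le> count G (LAt P)" using hboxL(3) by simp
  have "LAt P \<in># G" using c by (subst count_greater_zero_iff[symmetric]) linarith
  then have e: "add_mset X (add_mset (LBox l X) G) - {#LAt P#} = add_mset X (add_mset (LBox l X) (G - {#LAt P#}))"
    "add_mset (LBox l X) G - {#LAt P#} = add_mset (LBox l X) (G - {#LAt P#})"
    by (simp_all add: diff_union_swap2)
  have "hder rel n (add_mset X (add_mset (LBox l X) (G - {#LAt P#}))) D" using hboxL.IH[OF count2_add[OF count2_add[OF c]]] e by auto
  from hder.hboxL[OF this] show ?case unfolding e(2) .
next
  case (hboxR n Bx X l G D)
  have "LAt P \<notin># Bx" using hboxR(2) by fastforce
  then have "count Bx (LAt P) = 0" by (simp add: count_eq_zero_iff)
  then have "2 \<le> count G (LAt P)" using hboxR(5) by simp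
  then have c: "LAt P \<in># G" by (subst count_greater_zero_iff[symmetric]) linarith
  have e: "G + Bx - {#LAt P#} = (G - {#LAt P#}) + Bx" using c by (simp add: diff_union_swap2)
  show ?case unfolding e using hder.hboxR[OF hboxR(1-3)] by blast
qed

lemma two_hder: "hder rel k1 G1 D1 \<Longrightarrow> hder rel k2 G2 D2 \<Longrightarrow>
   \<exists>k. hder rel k G1 D1 \<and> hder rel k G2 D2"
  by (meson hder_mono max.cobounded1 max.cobounded2)

lemma cut_adm_aux:
  fixes rel :: "'l \<Rightarrow> 'l \<Rightarrow> bool"
  assumes tr: "transp rel"
  shows "\<forall>(C::('a,'l) lfm) n m G D. size C = s \<longrightarrow> n + m = N \<longrightarrow> hder rel n G (add_mset C D) \<longrightarrow>
           hder rel m (add_mset C G) D \<longrightarrow> (\<exists>k. hder rel k G D)"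
proof (induction s arbitrary: N rule: less_induct)
  case (less s)
  note IHs = less
  show ?case
  proof (induction N rule: less_induct)
    case (less N)
    note IHN = less
    show ?case
    proof (intro allI impI)
      fix C :: "('a,'l) lfm" and n m G D
      assume sC: "size C = s" and nm: "n + m = N" and L: "hder rel n G (add_mset C D)"
        and R: "hder rel m (add_mset C G) D"
      have cutS: "\<And>(C'::('a,'l) lfm) n' m' G' D'. size C' < size C \<Longrightarrow> hder rel n' G' (add_mset C' D') \<Longrightarrow>
          hder rel m' (add_mset C' G') D' \<Longrightarrow> \<exists>k. hder rel k G' D'"
      proof -
        fix C' :: "('a,'l) lfm" and n' m' G' D' assume a: "size C' < size C" "hder rel n' G' (add_mset C' D')"
          "hder rel m' (add_mset C' G') D'"
        have "size C' < s" using a sC by simp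
        from IHs[OF this, of "n' + m'"] have H: "\<forall>(C::('a,'l) lfm) n m G D. size C = size C' \<longrightarrow> n + m = n' + m' \<longrightarrow> hder rel n G (add_mset C D) \<longrightarrow>
           hder rel m (add_mset C G) D \<longrightarrow> (\<exists>k. hder rel k G D)" .
        show "\<exists>k. hder rel k G' D'" using H[rule_format, of C' n' m' G' D'] a by simp
      qed
      have cutN: "\<And>n' m' G' D'. n' + m' < n + m \<Longrightarrow> hder rel n' G' (add_mset C D') \<Longrightarrow>
          hder rel m' (add_mset C G') D' \<Longrightarrow> \<exists>k. hder rel k G' D'"
      proof -
        fix n' m' G' D' assume a: "n' + m' < n + m" "hder rel n' G' (add_mset C D')"
          "hder rel m' (add_mset C G') D'"
        have "n' + m' < N" using a nm by simp
        from IHN[OF this] have H: "\<forall>(C::('a,'l) lfm) n m G D. size C = s \<longrightarrow> n + m = n' + m' \<longrightarrow> hder rel n G (add_mset C D) \<longrightarrow>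
           hder rel m (add_mset C G) D \<longrightarrow> (\<exists>k. hder rel k G D)" .
        show "\<exists>k. hder rel k G' D'" using H[rule_format, of C n' m' G' D'] a sC by simp
      qed
      have right: "\<exists>k. hder rel k G D" if nat: "\<forall>Q. C \<noteq> LAt Q" "C \<noteq> LBot"
        and cond: "\<forall>l X. C = LBox l X \<longrightarrow> (\<exists>G0 B n0. G = G0 + B \<and> n = Suc n0 \<and> hder rel n0 B {#X#}
              \<and> (\<forall>x\<in>#B. is_lbox x) \<and> (\<forall>x\<in>#add_mset X B. \<forall>m\<in>labs x. rel m l))"
        using R
      proof (cases rule: hder.cases)
        case (hax P)
        then have "LAt P \<in># G" using nat by auto
        then show ?thesis using hax by (blast intro: hder.hax)
      next
        case hbot
        then have "LBot \<in># G" using nat by auto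
        then show ?thesis by (blast intro: hder.hbot)
      next
        case (himpL m0 G1 U V)
        note h = himpL
        show ?thesis
        proof (cases "C = LImp U V")
          case True
          then have G1: "G1 = G" using h by simp
          have r1: "hder rel m0 G (add_mset U (add_mset V D))" using h(3) G1 hder_weak2 by (metis add_mset_commute)
          have l1: "hder rel n (add_mset U G) (add_mset V D)" using inv_impR[OF L, of U V] True by simp
          obtain k1 where k1: "hder rel k1 G (add_mset V D)" using cutS[OF _ r1 l1] True by auto
          obtain k2 where "hder rel k2 G D" using cutS[OF _ k1, of m0] h(4) G1 True by auto
          then show ?thesis by blast
        next
          case False
          then obtain K where K: "G = add_mset (LImp U V) K" "G1 = add_mset C K"
            using h(2) by (auto simp: add_eq_conv_ex)
          have i: "hder rel n K (add_mset U (add_mset C D))" "hder rel n (add_mset V K) (add_mset C D)"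
            using inv_impL[OF L, of U V] K by auto
          obtain k1 where k1: "hder rel k1 K (add_mset U D)"
            using cutN[of n m0 K "add_mset U D"] i(1) h(1,3) K by (auto simp: add_mset_commute)
          obtain k2 where k2: "hder rel k2 (add_mset V K) D"
            using cutN[of n m0 "add_mset V K" D] i(2) h(1,4) K by (auto simp: add_mset_commute)
          obtain k where "hder rel k K (add_mset U D)" "hder rel k (add_mset V K) D"
            using two_hder[OF k1 k2] by blast
          from hder.himpL[OF this] show ?thesis using K by blast
        qed
      next
        case (himpR m0 U V D1)
        note h = himpR
        have i: "hder rel n (add_mset U G) (add_mset V (add_mset C D1))"
          using inv_impR[OF L, of U V] h by (simp add: add_mset_commute)
        obtain k where "hder rel k (add_mset U G) (add_mset V D1)"
          using cutN[of n m0 "add_mset U G" "add_mset V D1"] i h by (auto simp: add_mset_commute)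
        from hder.himpR[OF this] show ?thesis using h by blast
      next
        case (hboxL m0 U l' G1)
        note h = hboxL
        show ?thesis
        proof (cases "C = LBox l' U")
          case True
          then have G1: "G1 = G" using h by simp
          obtain G0 B n0 where c: "G = G0 + B" "n = Suc n0" "hder rel n0 B {#U#}"
            using cond True by blast
          have l1: "hder rel n (add_mset U G) (add_mset C D)" using hder_weak1[OF L] .
          obtain k1 where k1: "hder rel k1 (add_mset U G) D"
            using cutN[of n m0 "add_mset U G" D] l1 h G1 by (auto simp: add_mset_commute)
          have l2: "hder rel n0 G (add_mset U D)"
            using hder_weak[OF c(3), of G0 D] c(1) by (simp add: ac_simps)
          show ?thesis using cutS[OF _ l2 k1] True by auto
        next
          case False
          then obtain K where K: "G = add_mset (LBox l' U) K" "G1 = add_mset C K"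
            using h(2) by (auto simp: add_eq_conv_ex)
          have l1: "hder rel n (add_mset U G) (add_mset C D)" using hder_weak1[OF L] .
          obtain k1 where k1: "hder rel k1 (add_mset U G) D"
            using cutN[of n m0 "add_mset U G" D] l1 h K by (auto simp: add_mset_commute)
          then have "hder rel k1 (add_mset U (add_mset (LBox l' U) K)) D" using K by simp
          from hder.hboxL[OF this] show ?thesis using K by blast
        qed
      next
        case (hboxR m0 B2 U l2 G1 D1)
        note h = hboxR
        show ?thesis
        proof (cases "C \<in># B2")
          case False
          have "B2 \<subseteq># G" unfolding subseteq_mset_def
          proof
            fix a
            have "count (add_mset C G) a = count (G1 + B2) a" using h(2) by simp
            then show "count B2 a \<le> count G a" using False
              by (cases "a = C") (auto simp: not_in_iff)
          qed
          then have eq: "(G - B2) + B2 = G" by (simp add: subset_mset.diff_add)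
          have "hder rel (Suc m0) ((G - B2) + B2) (add_mset (LBox l2 U) D1)"
            by (rule hder.hboxR[OF h(4,5,6)])
          then show ?thesis using eq h(3) by auto
        next
          case True
          then obtain B3 where B3: "B2 = add_mset C B3" by (blast dest: multi_member_split)
          then have GB: "G = G1 + B3" using h(2) by simp
          obtain l X where CX: "C = LBox l X" using True h(5) by (cases C) auto
          obtain G0 B n0 where c: "G = G0 + B" "n = Suc n0" "hder rel n0 B {#X#}"
            "\<forall>x\<in>#B. is_lbox x" "\<forall>x\<in>#add_mset X B. \<forall>m\<in>labs x. rel m l"
            using cond CX by blast
          define Uu where "Uu = B \<union># B3"
          have sub1: "B \<subseteq># Uu" "B3 \<subseteq># Uu" unfolding Uu_def by (auto simp: subseteq_mset_def)
          have "B \<subseteq># G" using c(1) by simp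
          moreover have "B3 \<subseteq># G" unfolding GB by simp
          ultimately have "B \<subseteq># G" "B3 \<subseteq># G" by -
          then have subG: "Uu \<subseteq># G" unfolding Uu_def by (auto simp: subseteq_mset_def)
          have lU: "hder rel (Suc n0) ((Uu - B) + B) (add_mset C {#})"
            using hder.hboxR[OF c(3,4,5)] CX by simp
          then have lU: "hder rel (Suc n0) Uu (add_mset C {#})" using sub1 by (simp add: subset_mset.diff_add)
          have rU: "hder rel m0 (add_mset C Uu) {#U#}"
            using hder_weak_sub[OF h(4)] B3 sub1 by simp
          obtain k where k: "hder rel k Uu {#U#}"
            using cutN[OF _ _ rU] hder_weak2[OF lU, of U] c(2) h(1) by (auto simp: add_mset_commute)
          have boxes: "\<forall>x\<in>#Uu. is_lbox x" using c(4) h(5) B3 unfolding Uu_def by auto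
          have lC: "rel l l2" using h(6) B3 CX by auto
          have labs: "\<forall>x\<in>#add_mset U Uu. \<forall>m\<in>labs x. rel m l2"
          proof (intro ballI)
            fix x m assume x: "x \<in># add_mset U Uu" and m: "m \<in> labs x"
            show "rel m l2"
            proof (cases "x \<in># B")
              case True
              then have "rel m l" using c(5) m by auto
              then show ?thesis using lC tr by (meson transpE)
            next
              case False
              then have "x \<in># add_mset U B2" using x B3 unfolding Uu_def by auto
              then show ?thesis using h(6) m by auto
            qed
          qed
          have "hder rel (Suc k) ((G - Uu) + Uu) (add_mset (LBox l2 U) D1)"
            by (rule hder.hboxR[OF k boxes labs])
          then show ?thesis using subG h(3) by (auto simp: subset_mset.diff_add)
        qed
      qed
      show "\<exists>k. hder rel k G D"
        using L
      proof (cases rule: hder.cases)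
        case (hax P)
        show ?thesis
        proof (cases "LAt P \<in># D")
          case True then show ?thesis using hax by (blast intro: hder.hax)
        next
          case False
          then have C: "C = LAt P" using hax by auto
          have "1 \<le> count G (LAt P)" using hax by (simp add: Suc_le_eq)
          then have "2 \<le> count (add_mset C G) (LAt P)" using C by simp
          from contr_at[OF R this] show ?thesis using C by auto
        qed
      next
        case hbot then show ?thesis by (blast intro: hder.hbot)
      next
        case (himpL n0 G0 X Y)
        note h = himpL
        have i: "hder rel m (add_mset C G0) (add_mset X D)" "hder rel m (add_mset Y (add_mset C G0)) D"
          using inv_impL[OF R, of X Y] h by auto
        obtain k1 where k1: "hder rel k1 G0 (add_mset X D)"
          using cutN[of n0 m G0 "add_mset X D"] i(1) h by (auto simp: add_mset_commute)
        obtain k2 where k2: "hder rel k2 (add_mset Y G0) D"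
          using cutN[of n0 m "add_mset Y G0" D] i(2) h by (auto simp: add_mset_commute)
        obtain k where "hder rel k G0 (add_mset X D)" "hder rel k (add_mset Y G0) D"
          using two_hder[OF k1 k2] by blast
        from hder.himpL[OF this] show ?thesis using h by blast
      next
        case (himpR n0 X Y D0)
        note h = himpR
        show ?thesis
        proof (cases "C = LImp X Y")
          case True
          then show ?thesis using right by auto
        next
          case False
          then obtain K where K: "D = add_mset (LImp X Y) K" "D0 = add_mset C K"
            using h(2) by (auto simp: add_eq_conv_ex)
          have i: "hder rel m (add_mset X (add_mset C G)) (add_mset Y K)"
            using inv_impR[OF R, of X Y] K by simp
          obtain k where "hder rel k (add_mset X G) (add_mset Y K)"
            using cutN[of n0 m "add_mset X G" "add_mset Y K"] i h K by (auto simp: add_mset_commute)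
          from hder.himpR[OF this] show ?thesis using K by blast
        qed
      next
        case (hboxL n0 X l G0)
        note h = hboxL
        have r: "hder rel m (add_mset C (add_mset X G)) D" using hder_weak1[OF R, of X]
          by (simp add: add_mset_commute)
        obtain k where "hder rel k (add_mset X G) D"
          using cutN[of n0 m "add_mset X G" D] r h by auto
        from hder.hboxL[of rel k X l G0 D] this h show ?thesis by auto
      next
        case (hboxR n0 B X l G0 D0)
        note h = hboxR
        show ?thesis
        proof (cases "C = LBox l X")
          case True
          show ?thesis
          proof (rule right)
            show "\<forall>Q. C \<noteq> LAt Q" "C \<noteq> LBot" using True by auto
            show "\<forall>l' X'. C = LBox l' X' \<longrightarrow> (\<exists>G0 B n0. G = G0 + B \<and> n = Suc n0 \<and> hder rel n0 B {#X'#}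
              \<and> (\<forall>x\<in>#B. is_lbox x) \<and> (\<forall>x\<in>#add_mset X' B. \<forall>m\<in>labs x. rel m l'))"
              using True h by auto
          qed
        next
          case False
          then obtain K where K: "D = add_mset (LBox l X) K"
            using h(3) by (auto simp: add_eq_conv_ex)
          show ?thesis using hder.hboxR[OF h(4,5,6), of G0 K] h K by auto
        qed
      qed
    qed
  qed
qed

lemma cut_adm:
  assumes "transp rel" "hder rel n G (add_mset C D)" "hder rel m (add_mset C G) D"
  shows "\<exists>k. hder rel k G D"
  using cut_adm_aux[OF assms(1)] assms(2,3) by blast



lemma length_ins[simp]: "length (ins j x xs) = Suc (length xs)"
  by (simp add: ins_def)
lemma length_del[simp]: "i < length xs \<Longrightarrow> length (del i xs) = length xs - 1"
  by (simp add: del_def)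
lemma nth_ins: "j \<le> length xs \<Longrightarrow> p < Suc (length xs) \<Longrightarrow>
    ins j x xs ! p = (if p = j then x else xs ! unins j p)"
  by (auto simp: ins_def unins_def nth_append min_def)
lemma nth_ins_same[simp]: "j \<le> length xs \<Longrightarrow> ins j x xs ! j = x"
  by (simp add: nth_ins)
lemma nth_ins_other[simp]: "j \<le> length xs \<Longrightarrow> p < Suc (length xs) \<Longrightarrow> p \<noteq> j \<Longrightarrow>
    ins j x xs ! p = xs ! unins j p"
  by (simp add: nth_ins)
lemma nth_del[simp]: "i < length xs \<Longrightarrow> p < length xs - 1 \<Longrightarrow> del i xs ! p = xs ! undel i p"
  by (auto simp: del_def undel_def nth_append min_def)
lemma unins_lt[simp]: "j \<le> n \<Longrightarrow> p < Suc n \<Longrightarrow> p \<noteq> j \<Longrightarrow> unins j p < n"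
  by (auto simp: unins_def)
lemma unins_le1[simp]: "j \<le> n \<Longrightarrow> p < Suc n \<Longrightarrow> p \<noteq> j \<Longrightarrow> unins j p \<le> n - 1"
  by (auto simp: unins_def)
lemma boxl_aux[simp]: "i < length L \<Longrightarrow> j \<le> length L \<Longrightarrow> p \<noteq> j \<Longrightarrow> p < Suc (Suc (length L - Suc 0))
  \<Longrightarrow> ins (unins j p) x (del i L) ! unins j p = x"
  by (rule nth_ins_same) (auto simp: unins_def)
lemma undel_lt[simp]: "i < n \<Longrightarrow> p < n - 1 \<Longrightarrow> undel i p < n"
  by (auto simp: undel_def)
lemma map_ins: "map f (ins j x xs) = ins j (f x) (map f xs)"
  by (simp add: ins_def take_map drop_map)
lemma map_del: "map f (del i xs) = del i (map f xs)"
  by (simp add: del_def take_map drop_map)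

definition sd :: "bool \<Rightarrow> ('f list \<times> 'f list) \<Rightarrow> 'f list" where
  "sd side s = (if side then snd s else fst s)"

definition match :: "('f \<Rightarrow> nat list \<Rightarrow> 'f option) \<Rightarrow> 'a rule \<Rightarrow> ('f list \<times> 'f list)
     \<Rightarrow> ('f list \<times> 'f list) list \<Rightarrow> bool" where
  "match sub r s ps \<longleftrightarrow>
    (\<forall>c side p side' p' pre. c < length ps \<longrightarrow> p < length (sd side (ps!c)) \<longrightarrow>
       up r c side p = Some (side', p', pre) \<longrightarrow>
       p' < length (sd side' s) \<and> sub (sd side' s ! p') pre = Some (sd side (ps!c) ! p)) \<and>
    (\<forall>A j k. r = Cut A j k \<longrightarrow> length ps = 2 \<longrightarrow>
       j < length (snd (ps!0)) \<and> k < length (fst (ps!1)) \<and> snd (ps!0) ! j = fst (ps!1) ! k)"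

lemma C_f: assumes st: "step_ok r s ps" shows "match subfm r s ps"
proof -
  obtain L R where s: "s = (L, R)" by (cases s)
  show ?thesis using st unfolding s
    by (cases r) (auto simp: match_def sd_def nth_Cons' nth_ins split: if_splits)
qed

fun er :: "('a,'l) lfm \<Rightarrow> 'a fm" where
  "er LBot = Bot" | "er (LAt a) = At a" | "er (LImp A B) = Imp (er A) (er B)" | "er (LBox l A) = Box (er A)"

fun lsubfm :: "('a,'l) lfm \<Rightarrow> nat list \<Rightarrow> ('a,'l) lfm option" where
  "lsubfm A [] = Some A"
| "lsubfm (LImp A B) (n # q) = (if n = 0 then lsubfm A q else if n = 1 then lsubfm B q else None)"
| "lsubfm (LBox l A) (n # q) = (if n = 0 then lsubfm A q else None)"
| "lsubfm _ _ = None"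

fun is_latom :: "('a,'l) lfm \<Rightarrow> bool" where
  "is_latom (LAt _) = True" | "is_latom _ = False"

type_synonym ('a,'l) lseq = "('a,'l) lfm list \<times> ('a,'l) lfm list"

definition ers :: "('a,'l) lseq \<Rightarrow> 'a seq" where
  "ers s = (map er (fst s), map er (snd s))"

fun lshape :: "'a rule \<Rightarrow> ('a,'l) lseq \<Rightarrow> ('a,'l) lseq list \<Rightarrow> bool" where
  "lshape (Ax i j) (L, R) ps =
     (ps = [] \<and> i < length L \<and> j < length R \<and> L ! i = R ! j \<and> is_latom (L ! i))"
| "lshape (BotL i) (L, R) ps = (ps = [] \<and> i < length L \<and> L ! i = LBot)"
| "lshape (ImpL i j k) (L, R) ps =
     (i < length L \<and> j \<le> length R \<and> k < length L \<and>
      (\<exists>A B. L ! i = LImp A B \<and>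
         ps = [(del i L, ins j A R), (ins k B (del i L), R)]))"
| "lshape (ImpR i j k) (L, R) ps =
     (i < length R \<and> j \<le> length L \<and> k < length R \<and>
      (\<exists>A B. R ! i = LImp A B \<and> ps = [(ins j A L, ins k B (del i R))]))"
| "lshape (BoxL i j k) (L, R) ps =
     (i < length L \<and> k < length L \<and> j \<le> length L \<and>
      (\<exists>l A. L ! i = LBox l A \<and> ps = [(ins j A (ins k (LBox l A) (del i L)), R)]))"
| "lshape (BoxR ss i) (L, R) ps =
     (i < length R \<and> distinct ss \<and> (\<forall>s\<in>set ss. s < length L \<and> is_lbox (L ! s)) \<and>
      (\<exists>l A. R ! i = LBox l A \<and> ps = [(map (nth L) ss, [A])]))"
| "lshape (Cut A j k) (L, R) ps =
     (j \<le> length R \<and> k \<le> length L \<and> (\<exists>A'. er A' = A \<and> ps = [(L, ins j A' R), (ins k A' L, R)]))"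

definition boxcond :: "('l \<Rightarrow> 'l \<Rightarrow> bool) \<Rightarrow> 'a rule \<Rightarrow> ('a,'l) lseq \<Rightarrow> ('a,'l) lseq list \<Rightarrow> bool" where
  "boxcond rel r s ps \<longleftrightarrow> (\<forall>ss i l A. r = BoxR ss i \<longrightarrow> snd s ! i = LBox l A \<longrightarrow>
     (\<forall>x \<in> set (fst (ps!0)) \<union> set (snd (ps!0)). \<forall>m\<in>labs x. rel m l))"

lemma C_l: assumes st: "lshape r s ps" shows "match lsubfm r s ps"
proof -
  obtain L R where s: "s = (L, R)" by (cases s)
  show ?thesis using st unfolding s
    by (cases r) (auto simp: match_def sd_def nth_Cons' nth_ins split: if_splits)
qed

lemma match_nthD: "match sub r s ps \<Longrightarrow> c < length ps \<Longrightarrow> p < length (sd side (ps!c)) \<Longrightarrow>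
   up r c side p = Some (side', p', pre) \<Longrightarrow> sub (sd side' s ! p') pre = Some (sd side (ps!c) ! p)"
  unfolding match_def by blast

lemma match_unique:
  assumes m1: "match sub r s ps" and m2: "match sub r s ps'" and len: "length ps = length ps'"
    and lens: "\<And>c. c < length ps \<Longrightarrow> length (fst (ps!c)) = length (fst (ps'!c)) \<and> length (snd (ps!c)) = length (snd (ps'!c))"
    and none: "\<And>c side p. c < length ps \<Longrightarrow> p < length (sd side (ps!c)) \<Longrightarrow> up r c side p = None \<Longrightarrow>
        sd side (ps!c) ! p = sd side (ps'!c) ! p"
  shows "ps = ps'"
proof (rule nth_equalityI[OF len])
  fix c assume c: "c < length ps"
  have sdeq: "sd side (ps!c) = sd side (ps'!c)" for side
  proof (rule nth_equalityI)
    show "length (sd side (ps!c)) = length (sd side (ps'!c))" using lens[OF c] by (simp add: sd_def)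
    fix p assume p: "p < length (sd side (ps!c))"
    show "sd side (ps!c) ! p = sd side (ps'!c) ! p"
    proof (cases "up r c side p")
      case None then show ?thesis using none c p by blast
    next
      case (Some t)
      then obtain side' p' pre where t: "up r c side p = Some (side', p', pre)" by (cases t) auto
      have p2: "p < length (sd side (ps'!c))" using p lens[OF c] by (cases side) (simp_all add: sd_def)
      from match_nthD[OF m1 c p t] match_nthD[OF m2 _ p2 t] c len show ?thesis by simp
    qed
  qed
  show "ps ! c = ps' ! c" using sdeq[of True] sdeq[of False] by (simp add: sd_def prod_eq_iff)
qed

lemma er_eq_simps[simp]:
  "er x = Bot \<longleftrightarrow> x = LBot"
  "er x = At a \<longleftrightarrow> x = LAt a"
  "er x = Imp A0 B0 \<longleftrightarrow> (\<exists>A B. x = LImp A B \<and> er A = A0 \<and> er B = B0)"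
  "er x = Box A0 \<longleftrightarrow> (\<exists>l A. x = LBox l A \<and> er A = A0)"
  by (cases x; auto)+

lemma is_atom_er[simp]: "is_atom (er x) = is_latom x" by (cases x) auto
lemma is_box_er[simp]: "is_box (er x) = is_lbox x" by (cases x) auto

lemma map_ers_lens: "map ers ps = map ers ps0 \<Longrightarrow> length ps = length ps0 \<and>
   (\<forall>c<length ps. length (fst (ps!c)) = length (fst (ps0!c)) \<and> length (snd (ps!c)) = length (snd (ps0!c)))"
proof -
  assume a: "map ers ps = map ers ps0"
  then have l: "length ps = length ps0" by (metis length_map)
  have "\<forall>c<length ps. ers (ps!c) = ers (ps0!c)" using a l by (metis nth_map)
  then have "\<forall>c<length ps. map er (fst (ps!c)) = map er (fst (ps0!c)) \<and> map er (snd (ps!c)) = map er (snd (ps0!c))"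
    by (simp add: ers_def)
  then show ?thesis using l by (metis length_map)
qed

lemma B_core:
  assumes sh: "lshape r s ps0" and m: "match lsubfm r s ps" and e: "map ers ps = map ers ps0"
    and none: "\<And>c side p. c < length ps0 \<Longrightarrow> p < length (sd side (ps0!c)) \<Longrightarrow> up r c side p = None \<Longrightarrow>
        sd side (ps!c) ! p = sd side (ps0!c) ! p"
  shows "lshape r s ps"
proof -
  note ls = map_ers_lens[OF e]
  have "ps = ps0"
  proof (rule match_unique[OF m C_l[OF sh]])
    show "length ps = length ps0" using ls by simp
    show "\<And>c. c < length ps \<Longrightarrow> length (fst (ps!c)) = length (fst (ps0!c)) \<and> length (snd (ps!c)) = length (snd (ps0!c))"
      using ls by simp
    fix c side p assume "c < length ps" "p < length (sd side (ps!c))" "up r c side p = None"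
    then show "sd side (ps!c) ! p = sd side (ps0!c) ! p" using none[of c p side] ls
      by (cases side) (auto simp: sd_def)
  qed
  then show ?thesis using sh by simp
qed

lemma B: assumes st: "step_ok r (ers s) (map ers ps)" and m: "match lsubfm r s ps"
  shows "lshape r s ps"
proof -
  obtain L R where s: "s = (L, R)" by (cases s)
  show ?thesis
  proof (cases r)
    case (Ax i j) then show ?thesis using st by (cases "L!i"; cases "R!j") (auto simp: s ers_def)
  next
    case (BotL i) then show ?thesis using st by (auto simp: s ers_def)
  next
    case (ImpL i j k)
    then obtain A B where h: "i < length L" "j \<le> length R" "k < length L" "L!i = LImp A B"
      "map ers ps = map ers [(del i L, ins j A R), (ins k B (del i L), R)]"
      using st by (auto simp: s ers_def map_ins map_del)
    show ?thesis
      by (rule B_core[OF _ m h(5)]) (use h ImpL s in \<open>auto simp: sd_def nth_Cons' split: if_splits\<close>)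
  next
    case (ImpR i j k)
    then obtain A B where h: "i < length R" "j \<le> length L" "k < length R" "R!i = LImp A B"
      "map ers ps = map ers [(ins j A L, ins k B (del i R))]"
      using st by (auto simp: s ers_def map_ins map_del)
    show ?thesis
      by (rule B_core[OF _ m h(5)]) (use h ImpR s in \<open>auto simp: sd_def nth_Cons' split: if_splits\<close>)
  next
    case (BoxL i j k)
    then obtain l A where h: "i < length L" "k < length L" "j \<le> length L" "L!i = LBox l A"
      "map ers ps = map ers [(ins j A (ins k (LBox l A) (del i L)), R)]"
      using st by (auto simp: s ers_def map_ins map_del)
    show ?thesis
      by (rule B_core[OF _ m h(5)]) (use h BoxL s in \<open>auto simp: sd_def nth_Cons' split: if_splits\<close>)
  next
    case (BoxR ss i)
    then obtain A0 where h0: "i < length R" "distinct ss" "\<forall>s\<in>set ss. s < length L \<and> is_box (map er L ! s)"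
      "map er R ! i = Box A0" "map ers ps = [(map (nth (map er L)) ss, [A0])]"
    proof -
      have "step_ok (BoxR ss i) (map er L, map er R) (map ers ps)" using st unfolding BoxR s ers_def fst_conv snd_conv .
      then have c: "i < length R \<and> distinct ss \<and> (\<forall>s\<in>set ss. s < length L \<and> is_box (map er L ! s)) \<and>
         (\<exists>A. map er R ! i = Box A \<and> map ers ps = [(map (nth (map er L)) ss, [A])])"
        unfolding step_ok.simps length_map .
      obtain A0 where A0: "map er R ! i = Box A0 \<and> map ers ps = [(map (nth (map er L)) ss, [A0])]"
        using conjunct2[OF conjunct2[OF conjunct2[OF c]]] by (erule exE)
      show ?thesis
        by (rule that[OF conjunct1[OF c] conjunct1[OF conjunct2[OF c]] conjunct1[OF conjunct2[OF conjunct2[OF c]]]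
              conjunct1[OF A0] conjunct2[OF A0]])
    qed
    obtain l A where lA: "R!i = LBox l A" "er A = A0" using h0(1,4) by auto
    have bx: "\<forall>s\<in>set ss. s < length L \<and> is_lbox (L ! s)" using h0(3) by auto
    have "map (nth (map er L)) ss = map er (map (nth L) ss)" using bx by auto
    then have h: "i < length R" "distinct ss" "\<forall>s\<in>set ss. s < length L \<and> is_lbox (L ! s)"
      "R!i = LBox l A" "map ers ps = map ers [(map (nth L) ss, [A])]"
      using h0 lA bx by (auto simp: ers_def)
    show ?thesis
      by (rule B_core[OF _ m h(5)]) (use h BoxR s in \<open>auto simp: sd_def nth_Cons' split: if_splits\<close>)
  next
    case (Cut A j k)
    have "length (map ers ps) = 2" using st Cut s by (simp add: ers_def)
    then obtain p0 p1 where pp: "ps = [p0, p1]" by (auto simp: length_Suc_conv numeral_2_eq_2)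
    let ?A = "snd p0 ! j"
    have h0: "j \<le> length R" "k \<le> length L" "map er (fst p0) = map er L" "map er (snd p0) = ins j A (map er R)"
      "map er (fst p1) = ins k A (map er L)" "map er (snd p1) = map er R"
      using st Cut pp by (auto simp: s ers_def)
    have jl: "j < length (snd p0)" using h0(1,4) by (metis length_map length_ins less_Suc_eq_le)
    have eA: "er ?A = A" using h0(1,4) jl by (metis nth_map nth_ins_same length_map)
    have h: "j \<le> length R" "k \<le> length L" "map ers ps = map ers [(L, ins j ?A R), (ins k ?A L, R)]"
      "er ?A = A"
      using h0 eA pp by (auto simp: ers_def map_ins)
    show ?thesis
    proof (rule B_core[OF _ m h(3)])
      show "lshape r s [(L, ins j ?A R), (ins k ?A L, R)]" using h Cut s by auto
      have mc: "snd p0 ! j = fst p1 ! k" using m Cut pp unfolding match_def by auto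
      fix c side p assume "c < length [(L, ins j ?A R), (ins k ?A L, R)]"
        "p < length (sd side ([(L, ins j ?A R), (ins k ?A L, R)] ! c))"
        "up r c side p = None"
      then show "sd side (ps ! c) ! p = sd side ([(L, ins j ?A R), (ins k ?A L, R)] ! c) ! p"
        using Cut pp h mc by (auto simp: sd_def nth_Cons' split: if_splits)
    qed
  qed
qed

lemma map_nth_map: "\<forall>s\<in>set ss. s < length L \<Longrightarrow> map ((!) (map f L)) ss = map f (map ((!) L) ss)"
  by auto

lemma E: assumes sh: "lshape r s ps" shows "step_ok r (ers s) (map ers ps)"
proof -
  obtain L R where s: "s = (L, R)" by (cases s)
  show ?thesis using sh unfolding s
    by (cases r) (auto simp: ers_def map_ins map_del map_nth_map)
qed

lemma mset_del: "i < length L \<Longrightarrow> mset L = add_mset (L!i) (mset (del i L))"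
  unfolding del_def by (metis id_take_nth_drop mset_append add_mset_add_single union_mset_add_mset_right
      mset.simps(2) union_commute)

lemma mset_ins[simp]: "mset (ins j x xs) = add_mset x (mset xs)"
  unfolding ins_def by (metis mset_append mset.simps(2) append_take_drop_id union_mset_add_mset_right)

lemma mset_map_nth_sub: "distinct ss \<Longrightarrow> \<forall>s\<in>set ss. s < length L \<Longrightarrow> mset (map (nth L) ss) \<subseteq># mset L"
proof -
  assume d: "distinct ss" and b: "\<forall>s\<in>set ss. s < length L"
  have "mset ss \<subseteq># mset [0..<length L]"
    using d b by (simp add: subset_mset.le_iff_add[symmetric] subseteq_mset_def count_mset distinct_count_atmost_1 distinct_upt set_upt count_list_0_iff)
  then have "image_mset (nth L) (mset ss) \<subseteq># image_mset (nth L) (mset [0..<length L])"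
    by (rule image_mset_subseteq_mono)
  moreover have "mset L = image_mset (nth L) (mset [0..<length L])" by (metis map_nth mset_map)
  ultimately show ?thesis by (simp only: mset_map)
qed

datatype ('a,'l) ltree = LN "'a rule" "('a,'l) lseq" "('a,'l) ltree list"

fun lconcl :: "('a,'l) ltree \<Rightarrow> ('a,'l) lseq" where
  "lconcl (LN r s cs) = s"

fun lvalid :: "('l \<Rightarrow> 'l \<Rightarrow> bool) \<Rightarrow> ('a,'l) ltree \<Rightarrow> bool" where
  "lvalid rel (LN r s cs) = (\<not> is_cut r \<and> lshape r s (map lconcl cs) \<and> boxcond rel r s (map lconcl cs)
     \<and> list_all (lvalid rel) cs)"

fun erase :: "('a,'l) ltree \<Rightarrow> 'a ptree" where
  "erase (LN r s cs) = Node r (ers s) (map erase cs)"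

lemma D: assumes sh: "lshape r s ps" and nc: "\<not> is_cut r" and bc: "boxcond rel r s ps"
  and pr: "\<forall>p\<in>set ps. \<exists>n. hder rel n (mset (fst p)) (mset (snd p))"
  shows "\<exists>n. hder rel n (mset (fst s)) (mset (snd s))"
proof -
  obtain L R where s: "s = (L, R)" by (cases s)
  show ?thesis
  proof (cases r)
    case (Ax i j)
    then have h: "i < length L" "j < length R" "L!i = R!j" "is_latom (L!i)" using sh s by auto
    obtain a where a: "L!i = LAt a" using h(4) by (cases "L!i") simp_all
    have "LAt a \<in># mset L" using h(1) a nth_mem by fastforce
    moreover have "LAt a \<in># mset R" using h(2,3) a nth_mem by fastforce
    ultimately have "hder rel 0 (mset L) (mset R)" by (rule hder.hax)
    then show ?thesis using s by auto
  next
    case (BotL i)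
    then have h: "i < length L" "L!i = LBot" using sh s by simp_all
    have "LBot \<in># mset L" using h nth_mem by fastforce
    then have "hder rel 0 (mset L) (mset R)" by (rule hder.hbot)
    then show ?thesis using s by auto
  next
    case (ImpL i j k)
    then obtain A B where h: "i < length L" "j \<le> length R" "L!i = LImp A B"
      "ps = [(del i L, ins j A R), (ins k B (del i L), R)]" using sh s by auto
    obtain n1 n2 where "hder rel n1 (mset (del i L)) (add_mset A (mset R))"
      "hder rel n2 (add_mset B (mset (del i L))) (mset R)" using pr h(4) by auto
    from two_hder[OF this] obtain n where n12: "hder rel n (mset (del i L)) (add_mset A (mset R))"
      "hder rel n (add_mset B (mset (del i L))) (mset R)" by blast
    have e: "mset L = add_mset (LImp A B) (mset (del i L))" using mset_del[OF h(1)] h(3) by simp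
    have "hder rel (Suc n) (mset L) (mset R)" using hder.himpL[OF n12] e by simp
    then show ?thesis using s by auto
  next
    case (ImpR i j k)
    then obtain A B where h: "i < length R" "R!i = LImp A B"
      "ps = [(ins j A L, ins k B (del i R))]" using sh s by auto
    obtain n where n1: "hder rel n (add_mset A (mset L)) (add_mset B (mset (del i R)))" using pr h(3) by auto
    have e: "mset R = add_mset (LImp A B) (mset (del i R))" using mset_del[OF h(1)] h(2) by simp
    have "hder rel (Suc n) (mset L) (mset R)" using hder.himpR[OF n1] e by simp
    then show ?thesis using s by auto
  next
    case (BoxL i j k)
    then obtain l A where h: "i < length L" "L!i = LBox l A"
      "ps = [(ins j A (ins k (LBox l A) (del i L)), R)]" using sh s by auto
    obtain n where n1: "hder rel n (add_mset A (add_mset (LBox l A) (mset (del i L)))) (mset R)" using pr h(3) by auto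
    have e: "mset L = add_mset (LBox l A) (mset (del i L))" using mset_del[OF h(1)] h(2) by simp
    have "hder rel (Suc n) (mset L) (mset R)" using hder.hboxL[OF n1] e by simp
    then show ?thesis using s by auto
  next
    case (BoxR ss i)
    then obtain l A where h: "i < length R" "distinct ss" "\<forall>s\<in>set ss. s < length L \<and> is_lbox (L ! s)"
      "R!i = LBox l A" "ps = [(map (nth L) ss, [A])]" using sh s by auto
    obtain n where hn: "hder rel n (mset (map (nth L) ss)) {#A#}" using pr h(5) by auto
    have bx: "\<forall>x\<in>#mset (map (nth L) ss). is_lbox x" using h(3) by auto
    have "\<forall>x \<in> set (fst (ps!0)) \<union> set (snd (ps!0)). \<forall>m\<in>labs x. rel m l"
      using bc BoxR h(4) s unfolding boxcond_def by simp
    then have lb: "\<forall>x\<in>#add_mset A (mset (map (nth L) ss)). \<forall>m\<in>labs x. rel m l"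
      using h(5) by simp
    have sub: "mset (map (nth L) ss) \<subseteq># mset L" using mset_map_nth_sub[OF h(2)] h(3) by auto
    have e: "mset R = add_mset (LBox l A) (mset (del i R))" using mset_del[OF h(1)] h(4) by simp
    have e2: "mset L - mset (map (nth L) ss) + mset (map (nth L) ss) = mset L"
      using sub by (rule subset_mset.diff_add)
    have "hder rel (Suc n) (mset L) (mset R)"
      using hder.hboxR[OF hn bx lb, of "mset L - mset (map (nth L) ss)" "mset (del i R)"] e e2 by simp
    then show ?thesis using s by auto
  next
    case (Cut A j k) then show ?thesis using nc by simp
  qed
qed

lemma sub_indices: "B \<subseteq># mset L \<Longrightarrow> \<exists>ss. distinct ss \<and> (\<forall>s\<in>set ss. s < length L) \<and> mset (map (nth L) ss) = B"
proof (induction L arbitrary: B)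
  case Nil then show ?case by auto
next
  case (Cons x L)
  show ?case
  proof (cases "x \<in># B")
    case True
    then have "B - {#x#} \<subseteq># mset L" using Cons.prems
      by (simp add: subset_eq_diff_conv)
    from Cons.IH[OF this] obtain ss where ss: "distinct ss" "\<forall>s\<in>set ss. s < length L" "mset (map (nth L) ss) = B - {#x#}"
      by blast
    have "mset (map (nth (x # L)) (0 # map Suc ss)) = B" using ss True by (simp add: comp_def)
    then show ?thesis using ss by (intro exI[of _ "0 # map Suc ss"]) (auto simp: distinct_map)
  next
    case False
    have "B \<subseteq># mset L" unfolding subseteq_mset_def
    proof
      fix a
      have "count B a \<le> count (mset (x # L)) a" using Cons.prems by (rule mset_subset_eq_count)
      then show "count B a \<le> count (mset L) a" using False by (cases "a = x") (auto simp: not_in_iff)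
    qed
    from Cons.IH[OF this] obtain ss where ss: "distinct ss" "\<forall>s\<in>set ss. s < length L" "mset (map (nth L) ss) = B"
      by blast
    have "mset (map (nth (x # L)) (map Suc ss)) = B" using ss by (simp add: comp_def)
    then show ?thesis using ss by (intro exI[of _ "map Suc ss"]) (auto simp: distinct_map)
  qed
qed

lemma mem_idx: "x \<in># mset L \<Longrightarrow> \<exists>i<length L. L!i = x"
  by (simp add: in_set_conv_nth)

lemma F: "hder rel n M N \<Longrightarrow> mset L = M \<Longrightarrow> mset R = N \<Longrightarrow> \<exists>t. lvalid rel t \<and> lconcl t = (L, R)"
proof (induction arbitrary: L R rule: hder.induct)
  case (hax P G D n)
  obtain i where i: "i < length L" "L!i = LAt P" using mem_idx hax by metis
  obtain j where j: "j < length R" "R!j = LAt P" using mem_idx hax by metis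
  have "lvalid rel (LN (Ax i j) (L, R) [])" using i j by (simp add: boxcond_def)
  then show ?case by fastforce
next
  case (hbot G n D)
  obtain i where i: "i < length L" "L!i = LBot" using mem_idx hbot by metis
  have "lvalid rel (LN (BotL i) (L, R) [])" using i by (simp add: boxcond_def)
  then show ?case by fastforce
next
  case (himpL n G A D B)
  obtain i where i: "i < length L" "L!i = LImp A B" using mem_idx himpL by (metis union_single_eq_member)
  have G: "mset (del i L) = G" using mset_del[OF i(1)] i(2) himpL.prems by simp
  obtain t1 where t1: "lvalid rel t1" "lconcl t1 = (del i L, ins 0 A R)"
    using himpL.IH(1)[of "del i L" "ins 0 A R"] G himpL.prems by auto
  obtain t2 where t2: "lvalid rel t2" "lconcl t2 = (ins 0 B (del i L), R)"
    using himpL.IH(2)[of "ins 0 B (del i L)" R] G himpL.prems by auto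
  have "lvalid rel (LN (ImpL i 0 0) (L, R) [t1, t2])" using i t1 t2 by (auto simp: boxcond_def)
  then show ?case by fastforce
next
  case (himpR n A G B D)
  obtain i where i: "i < length R" "R!i = LImp A B" using mem_idx himpR by (metis union_single_eq_member)
  have D: "mset (del i R) = D" using mset_del[OF i(1)] i(2) himpR.prems by simp
  obtain t1 where t1: "lvalid rel t1" "lconcl t1 = (ins 0 A L, ins 0 B (del i R))"
    using himpR.IH[of "ins 0 A L" "ins 0 B (del i R)"] D himpR.prems by auto
  have "lvalid rel (LN (ImpR i 0 0) (L, R) [t1])" using i t1 by (auto simp: boxcond_def)
  then show ?case by fastforce
next
  case (hboxL n A l G D)
  obtain i where i: "i < length L" "L!i = LBox l A" using mem_idx hboxL by (metis union_single_eq_member)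
  have G: "mset (del i L) = G" using mset_del[OF i(1)] i(2) hboxL.prems by simp
  obtain t1 where t1: "lvalid rel t1" "lconcl t1 = (ins 0 A (ins 0 (LBox l A) (del i L)), R)"
    using hboxL.IH[of "ins 0 A (ins 0 (LBox l A) (del i L))" R] G hboxL.prems by auto
  have "lvalid rel (LN (BoxL i 0 0) (L, R) [t1])" using i t1 by (auto simp: boxcond_def)
  then show ?case by fastforce
next
  case (hboxR n B A l G D)
  obtain i where i: "i < length R" "R!i = LBox l A" using mem_idx hboxR by (metis union_single_eq_member)
  have "B \<subseteq># mset L" using hboxR.prems by simp
  then obtain ss where ss: "distinct ss" "\<forall>s\<in>set ss. s < length L" "mset (map (nth L) ss) = B"
    using sub_indices by blast
  obtain t1 where t1: "lvalid rel t1" "lconcl t1 = (map (nth L) ss, [A])"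
    using hboxR.IH[of "map (nth L) ss" "[A]"] ss by auto
  have bx: "\<forall>s\<in>set ss. s < length L \<and> is_lbox (L ! s)"
  proof
    fix s assume "s \<in> set ss"
    then have "L!s \<in># B" using ss by (metis image_eqI list.set_map set_mset_mset)
    then show "s < length L \<and> is_lbox (L ! s)" using hboxR(2) ss \<open>s \<in> set ss\<close> by blast
  qed
  have lb: "\<forall>x \<in> set (map (nth L) ss) \<union> set [A]. \<forall>m\<in>labs x. rel m l"
    using hboxR(3) ss by auto
  have "lvalid rel (LN (BoxR ss i) (L, R) [t1])" using i t1 ss bx lb by (auto simp: boxcond_def)
  then show ?case by fastforce
qed



fun relabel :: "(nat list \<Rightarrow> 'l) \<Rightarrow> 'a fm \<Rightarrow> ('a,'l) lfm" where
  "relabel f Bot = LBot"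
| "relabel f (At a) = LAt a"
| "relabel f (Imp A B) = LImp (relabel (\<lambda>q. f (0 # q)) A) (relabel (\<lambda>q. f (1 # q)) B)"
| "relabel f (Box A) = LBox (f []) (relabel (\<lambda>q. f (0 # q)) A)"

lemma er_relabel[simp]: "er (relabel f X) = X"
  by (induction X arbitrary: f) auto

lemma lsubfm_relabel: "lsubfm (relabel f X) q = map_option (relabel (\<lambda>q'. f (q @ q'))) (subfm X q)"
  by (induction X q arbitrary: f rule: subfm.induct) auto

lemma relabel_cong: "(\<And>q B. subfm X q = Some (Box B) \<Longrightarrow> f q = g q) \<Longrightarrow> relabel f X = relabel g X"
proof (induction X arbitrary: f g)
  case (Imp A B)
  have "relabel (\<lambda>q. f (0 # q)) A = relabel (\<lambda>q. g (0 # q)) A" using Imp.prems by (intro Imp.IH(1)) auto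
  moreover have "relabel (\<lambda>q. f (1 # q)) B = relabel (\<lambda>q. g (1 # q)) B" using Imp.prems by (intro Imp.IH(2)) auto
  ultimately show ?case by simp
next
  case (Box A)
  have "relabel (\<lambda>q. f (0 # q)) A = relabel (\<lambda>q. g (0 # q)) A" using Box.prems by (intro Box.IH) auto
  moreover have "f [] = g []" using Box.prems[of "[]" A] by simp
  ultimately show ?case by simp
qed auto

lemma labs_relabel: "m \<in> labs (relabel f X) \<Longrightarrow> \<exists>q B. subfm X q = Some (Box B) \<and> m = f q"
proof (induction X arbitrary: f)
  case (Imp A B)
  then consider "m \<in> labs (relabel (\<lambda>q. f (0 # q)) A)" | "m \<in> labs (relabel (\<lambda>q. f (1 # q)) B)" by auto
  then show ?case
  proof cases
    case 1 from Imp.IH(1)[OF 1] obtain q C where "subfm A q = Some (Box C)" "m = f (0 # q)" by blast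
    then show ?thesis by (intro exI[of _ "0 # q"]) auto
  next
    case 2 from Imp.IH(2)[OF 2] obtain q C where "subfm B q = Some (Box C)" "m = f (1 # q)" by blast
    then show ?thesis by (intro exI[of _ "1 # q"]) auto
  qed
next
  case (Box A)
  then consider "m = f []" | "m \<in> labs (relabel (\<lambda>q. f (0 # q)) A)" by auto
  then show ?case
  proof cases
    case 1 then show ?thesis by (intro exI[of _ "[]"]) auto
  next
    case 2 from Box.IH[OF 2] obtain q C where "subfm A q = Some (Box C)" "m = f (0 # q)" by blast
    then show ?thesis by (intro exI[of _ "0 # q"]) auto
  qed
qed auto

lemma lsubfm_labs: "lsubfm X q = Some (LBox l Y) \<Longrightarrow> l \<in> labs X"
  by (induction X q rule: lsubfm.induct) (auto split: if_splits)

lemma subfm_er: "subfm (er X) q = map_option er (lsubfm X q)"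
  by (induction X q rule: lsubfm.induct) auto

lemma subfm_append: "subfm X (p @ q) = (case subfm X p of None \<Rightarrow> None | Some Y \<Rightarrow> subfm Y q)"
  by (induction X p rule: subfm.induct) auto

lemma lsubfm_append: "lsubfm X (p @ q) = (case lsubfm X p of None \<Rightarrow> None | Some Y \<Rightarrow> lsubfm Y q)"
  by (induction X p rule: lsubfm.induct) auto

lemma subtree_append: "subtree T (a @ b) = (case subtree T a of None \<Rightarrow> None | Some u \<Rightarrow> subtree u b)"
proof (induction T a rule: subtree.induct)
  case (2 r s cs c a) then show ?case by auto
qed simp

fun lsubtree :: "('a,'l) ltree \<Rightarrow> nat list \<Rightarrow> ('a,'l) ltree option" where
  "lsubtree t [] = Some t"
| "lsubtree (LN r s cs) (c # a) = (if c < length cs then lsubtree (cs ! c) a else None)"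

lemma lsubtree_append: "lsubtree T (a @ b) = (case lsubtree T a of None \<Rightarrow> None | Some u \<Rightarrow> lsubtree u b)"
proof (induction T a rule: lsubtree.induct)
  case (2 r s cs c a) then show ?case by auto
qed simp

lemma subtree_erase: "subtree (erase t) a = map_option erase (lsubtree t a)"
proof (induction t a rule: lsubtree.induct)
  case (2 r s cs c a) then show ?case by auto
qed simp

definition lfm_at :: "('a,'l) ltree \<Rightarrow> occ \<Rightarrow> ('a,'l) lfm option" where
  "lfm_at t oc = (case oc of (a, side, i, q) \<Rightarrow>
     (case lsubtree t a of None \<Rightarrow> None
      | Some u \<Rightarrow> (if i < length (sd side (lconcl u)) then lsubfm (sd side (lconcl u) ! i) q else None)))"

lemma concl_erase[simp]: "concl (erase t) = ers (lconcl t)"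
  by (cases t) auto

lemma fm_at_erase: "fm_at (erase t) oc = map_option er (lfm_at t oc)"
  by (cases oc) (auto simp: fm_at_def lfm_at_def subtree_erase seq_fm_def sd_def ers_def subfm_er
      split: option.splits)

lemma lvalid_sub: "lvalid rel t \<Longrightarrow> lsubtree t a = Some u \<Longrightarrow> lvalid rel u"
proof (induction t a rule: lsubtree.induct)
  case (2 r s cs c a) then show ?case by (auto simp: list_all_length split: if_splits)
qed simp

lemma valid_sub: "valid b t \<Longrightarrow> subtree t a = Some u \<Longrightarrow> valid b u"
proof (induction t a rule: subtree.induct)
  case (2 r s cs c a) then show ?case by (auto simp: list_all_length split: if_splits)
qed simp

lemma valid_erase: "lvalid rel t \<Longrightarrow> valid False (erase t)"
proof (induction t)
  case (LN r s cs)
  have "step_ok r (ers s) (map ers (map lconcl cs))" using LN.prems by (intro E) simp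
  then show ?case using LN by (auto simp: list_all_iff comp_def)
qed

lemma lfm_at_simp: "lfm_at t (a, side, i, q) = (case lsubtree t a of None \<Rightarrow> None
      | Some u \<Rightarrow> (if i < length (sd side (lconcl u)) then lsubfm (sd side (lconcl u) ! i) q else None))"
  by (simp add: lfm_at_def)

lemma dcorr_lfm:
  assumes v: "lvalid rel t" and d: "dcorr (erase t) o1 o2"
  shows "lfm_at t o1 = lfm_at t o2"
proof -
  have occ1: "is_occ (erase t) o1" using d by (simp add: dcorr_def)
  from d consider (a) a c side p q r s cs side' p' pre where
      "subtree (erase t) a = Some (Node r s cs)" "c < length cs"
      "o1 = (a @ [c], side, p, q)" "up r c side p = Some (side', p', pre)" "o2 = (a, side', p', pre @ q)"
    | (b) a A j k s cs where "subtree (erase t) a = Some (Node (Cut A j k) s cs)"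
    unfolding dcorr_def by blast
  then show ?thesis
  proof cases
    case a
    obtain u where u: "lsubtree t a = Some u" "erase u = Node r s cs" using a(1) by (auto simp: subtree_erase)
    obtain s' cs' where u': "u = LN r s' cs'" "s = ers s'" "cs = map erase cs'" using u(2) by (cases u) auto
    have vu: "lvalid rel u" using lvalid_sub[OF v u(1)] .
    then have "lshape r s' (map lconcl cs')" using u' by simp
    then have m: "match lsubfm r s' (map lconcl cs')" by (rule C_l)
    have c: "c < length cs'" using a(2) u' by simp
    have st: "lsubtree t (a @ [c]) = Some (cs' ! c)" using u u' c by (simp add: lsubtree_append)
    have "lfm_at t o1 \<noteq> None" using occ1 by (simp add: is_occ_def fm_at_erase)
    then have p: "p < length (sd side (lconcl (cs' ! c)))" using a(3) st by (auto simp: lfm_at_simp split: if_splits)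
    have "p < length (sd side (map lconcl cs' ! c))" using p c by simp
    from match_nthD[OF m _ this a(4)] c
    have e: "lsubfm (sd side' s' ! p') pre = Some (sd side (lconcl (cs' ! c)) ! p)" by simp
    have p': "p' < length (sd side' s')" using m c p a(4) unfolding match_def by auto
    show ?thesis using a(3,5) st u u' p p' e by (simp add: lfm_at_simp lsubfm_append)
  next
    case b
    obtain u where u: "lsubtree t a = Some u" "erase u = Node (Cut A j k) s cs" using b(1) by (auto simp: subtree_erase)
    obtain s' cs' where u': "u = LN (Cut A j k) s' cs'" using u(2) by (cases u) auto
    have "lvalid rel u" using lvalid_sub[OF v u(1)] .
    then show ?thesis using u' by simp
  qed
qed

lemma corr_lfm: assumes v: "lvalid rel t" and c: "corr (erase t) o1 o2" shows "lfm_at t o1 = lfm_at t o2"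
  using c unfolding corr_def
proof (induction rule: rtranclp_induct)
  case (step y z)
  then show ?case using dcorr_lfm[OF v] by metis
qed simp

lemma chain_tranclp:
  assumes ne: "fs \<noteq> []" and ch: "\<forall>n<length fs. R (fs!n) (fs!((n+1) mod length fs))"
  shows "R\<^sup>+\<^sup>+ (fs!0) (fs!0)"
proof -
  have "\<forall>n. n < length fs \<longrightarrow> R\<^sup>+\<^sup>+ (fs!0) (fs!((n+1) mod length fs))"
  proof
    fix n show "n < length fs \<longrightarrow> R\<^sup>+\<^sup>+ (fs!0) (fs!((n+1) mod length fs))"
    proof (induction n)
      case 0 then show ?case using ch by auto
    next
      case (Suc n)
      show ?case
      proof
        assume a: "Suc n < length fs"
        then have "R\<^sup>+\<^sup>+ (fs!0) (fs!(Suc n))" using Suc by simp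
        moreover have "R (fs!(Suc n)) (fs!((Suc n + 1) mod length fs))" using ch a by blast
        ultimately show "R\<^sup>+\<^sup>+ (fs!0) (fs!((Suc n + 1) mod length fs))" by simp
      qed
    qed
  qed
  then have H: "\<forall>n. n < length fs \<longrightarrow> R\<^sup>+\<^sup>+ (fs!0) (fs!((n+1) mod length fs))" .
  have "length fs - 1 < length fs" using ne by simp
  from H[rule_format, OF this] have "R\<^sup>+\<^sup>+ (fs!0) (fs!((length fs - 1 + 1) mod length fs))" .
  then show ?thesis using ne by simp
qed

lemma erase_cycle_free:
  assumes v: "lvalid rel t" and tr: "transp rel" and irr: "\<And>x. \<not> rel x x"
  shows "prehist_cycle_free (erase t)"
proof -
  define lab where "lab oc = (case lfm_at t oc of Some (LBox l _) \<Rightarrow> l | _ \<Rightarrow> undefined)" for oc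
  define Lab where "Lab F = lab (SOME oc. oc \<in> F)" for F
  have famlab: "Lab F = lab oc" if F: "F \<in> families (erase t)" and oc: "oc \<in> F" for F oc
  proof -
    obtain o0 where o0: "F = family (erase t) o0" using F by (auto simp: families_def)
    have sm: "(SOME x. x \<in> F) \<in> F" using oc by (rule someI)
    have "lfm_at t o0 = lfm_at t oc" using oc o0 corr_lfm[OF v] by (auto simp: family_def)
    moreover have "lfm_at t o0 = lfm_at t (SOME x. x \<in> F)" using sm o0 corr_lfm[OF v] by (auto simp: family_def)
    ultimately show ?thesis by (simp add: Lab_def lab_def)
  qed
  have step: "rel (Lab F) (Lab G)" if p: "prehist (erase t) F G" for F G
  proof -
    from p obtain a ss i s cs oc where h: "F \<in> families (erase t)" "G \<in> families (erase t)"
      "subtree (erase t) a = Some (Node (BoxR ss i) s cs)" "(a, True, i, []) \<in> G"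
      "box_occ (erase t) oc" "fst oc = a @ [0]" "oc \<in> F"
      unfolding prehist_def by blast
    obtain u where u: "lsubtree t a = Some u" "erase u = Node (BoxR ss i) s cs"
      using h(3) by (auto simp: subtree_erase)
    obtain L' R' cs' where u': "u = LN (BoxR ss i) (L', R') cs'" using u(2) by (cases u) auto
    have vu: "lvalid rel u" using lvalid_sub[OF v u(1)] .
    then obtain l A where sh: "i < length R'" "R' ! i = LBox l A" "map lconcl cs' = [(map (nth L') ss, [A])]"
      using u' by auto
    have bc0: "boxcond rel (BoxR ss i) (L', R') (map lconcl cs')" using vu u' by simp
    have "\<forall>x \<in> set (fst ((map lconcl cs')!0)) \<union> set (snd ((map lconcl cs')!0)). \<forall>m\<in>labs x. rel m l"
      using bc0 sh(2) unfolding boxcond_def by simp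
    then have bc: "\<forall>x \<in> set (map (nth L') ss) \<union> set [A]. \<forall>m\<in>labs x. rel m l"
      using sh(3) by simp
    have lG: "lab (a, True, i, []) = l" using u u' sh by (simp add: lab_def lfm_at_simp sd_def)
    obtain side p q where oc: "oc = (a @ [0], side, p, q)" using h(6) by (cases oc) auto
    obtain B0 where "fm_at (erase t) oc = Some (Box B0)" using h(5) by (auto simp: box_occ_def)
    then obtain m Y where lo: "lfm_at t oc = Some (LBox m Y)" by (auto simp: fm_at_erase)
    have c0: "cs' \<noteq> []" "lconcl (cs' ! 0) = (map (nth L') ss, [A])" using sh(3) by (cases cs'; auto)+
    have st: "lsubtree t (a @ [0]) = Some (cs' ! 0)" using u u' c0 by (simp add: lsubtree_append)
    have pl: "p < length (sd side (lconcl (cs' ! 0)))" and e: "lsubfm (sd side (lconcl (cs' ! 0)) ! p) q = Some (LBox m Y)"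
      using lo st oc by (auto simp: lfm_at_simp split: if_splits)
    have "m \<in> labs (sd side (lconcl (cs' ! 0)) ! p)" using lsubfm_labs[OF e] .
    moreover have "sd side (lconcl (cs' ! 0)) ! p \<in> set (map (nth L') ss) \<union> set [A]"
      using pl c0(2) by (cases side) (auto simp: sd_def)
    ultimately have "rel m l" using bc by blast
    moreover have "lab oc = m" using lo by (simp add: lab_def)
    moreover have "Lab F = lab oc" using famlab h(1,7) by blast
    moreover have "Lab G = lab (a, True, i, [])" using famlab h(2,4) by blast
    ultimately show ?thesis using lG by simp
  qed
  show ?thesis unfolding prehist_cycle_free_def
  proof
    assume "\<exists>fs. fs \<noteq> [] \<and> (\<forall>n<length fs. prehist (erase t) (fs ! n) (fs ! ((n + 1) mod length fs)))"
    then obtain fs where fs: "fs \<noteq> []" "\<forall>n<length fs. prehist (erase t) (fs ! n) (fs ! ((n + 1) mod length fs))"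
      by blast
    have "\<forall>n<length (map Lab fs). rel (map Lab fs ! n) (map Lab fs ! ((n + 1) mod length (map Lab fs)))"
      using fs step by simp
    from chain_tranclp[OF _ this] fs(1) have "rel\<^sup>+\<^sup>+ (Lab (fs!0)) (Lab (fs!0))" by simp
    then show False using tranclp_ident_if_transp[OF tr] irr by simp
  qed
qed

definition lab_list :: "'a ptree \<Rightarrow> nat list \<Rightarrow> bool \<Rightarrow> 'a fm list \<Rightarrow> ('a, occ set) lfm list" where
  "lab_list T a side xs = map (\<lambda>p. relabel (\<lambda>q. family T (a, side, p, q)) (xs ! p)) [0..<length xs]"

definition lab_seq :: "'a ptree \<Rightarrow> nat list \<Rightarrow> 'a seq \<Rightarrow> ('a, occ set) lseq" where
  "lab_seq T a s = (lab_list T a False (fst s), lab_list T a True (snd s))"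

lemma length_lab_list[simp]: "length (lab_list T a side xs) = length xs"
  by (simp add: lab_list_def)
lemma nth_lab_list[simp]: "p < length xs \<Longrightarrow> lab_list T a side xs ! p = relabel (\<lambda>q. family T (a, side, p, q)) (xs ! p)"
  by (simp add: lab_list_def)
lemma sd_lab_seq[simp]: "sd side (lab_seq T a s) = lab_list T a side (sd side s)"
  by (simp add: lab_seq_def sd_def)
lemma map_er_lab_list[simp]: "map er (lab_list T a side xs) = xs"
  by (simp add: lab_list_def comp_def map_nth)
lemma ers_lab_seq[simp]: "ers (lab_seq T a s) = s"
  by (simp add: ers_def lab_seq_def)

lemma corr_sym: "corr T o1 o2 \<Longrightarrow> corr T o2 o1"
  unfolding corr_def
proof (induction rule: rtranclp_induct)
  case (step y z)
  then show ?case by (metis (mono_tags, lifting) converse_rtranclp_into_rtranclp)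
qed simp

lemma family_corr: assumes c: "corr T o1 o2" shows "family T o1 = family T o2"
proof -
  have "corr T o1 o' \<longleftrightarrow> corr T o2 o'" for o'
    using c corr_sym[OF c] unfolding corr_def by (meson rtranclp_trans)
  then show ?thesis unfolding family_def by auto
qed

lemma fm_at_simp: "fm_at T (a, side, p, q) = (case subtree T a of None \<Rightarrow> None
   | Some t \<Rightarrow> (if p < length (sd side (concl t)) then subfm (sd side (concl t) ! p) q else None))"
  by (simp add: fm_at_def seq_fm_def sd_def split: option.splits)

lemma step1_match:
  assumes v: "valid b T" and st: "subtree T a = Some (Node r s cs)"
  shows "match lsubfm r (lab_seq T a s) (map (\<lambda>c. lab_seq T (a @ [c]) (concl (cs ! c))) [0..<length cs])"
proof -
  have "step_ok r s (map concl cs)" using valid_sub[OF v st] by simp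
  then have m: "match subfm r s (map concl cs)" by (rule C_f)
  have key: "relabel (\<lambda>q. family T (a, side', p', pre @ q)) Y = relabel (\<lambda>q. family T (a @ [c], side, p, q)) Y"
    if c: "c < length cs" and p: "p < length (sd side (concl (cs!c)))" and u: "up r c side p = Some (side', p', pre)"
       and Y: "Y = sd side (concl (cs!c)) ! p" for c side p side' p' pre Y
  proof (rule relabel_cong)
    fix q B assume qB: "subfm Y q = Some (Box B)"
    have pl: "p < length (sd side (map concl cs ! c))" using p c by simp
    have p': "p' < length (sd side' s)" and e: "subfm (sd side' s ! p') pre = Some Y"
      using match_nthD[OF m _ pl u] m c pl u Y unfolding match_def by auto
    have st2: "subtree T (a @ [c]) = Some (cs ! c)" using st c by (simp add: subtree_append)
    have o1: "is_occ T (a @ [c], side, p, q)" using st2 p qB Y by (simp add: is_occ_def fm_at_simp)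
    have o2: "is_occ T (a, side', p', pre @ q)" using st p' e qB by (simp add: is_occ_def fm_at_simp subfm_append)
    have "dcorr T (a @ [c], side, p, q) (a, side', p', pre @ q)"
      unfolding dcorr_def using o1 o2 st c u by blast
    then have "corr T (a @ [c], side, p, q) (a, side', p', pre @ q)" by (simp add: corr_def r_into_rtranclp)
    then show "family T (a, side', p', pre @ q) = family T (a @ [c], side, p, q)" using family_corr by metis
  qed
  show ?thesis unfolding match_def
  proof (rule conjI; intro allI impI)
    fix c side p side' p' pre
    assume c: "c < length (map (\<lambda>c. lab_seq T (a @ [c]) (concl (cs ! c))) [0..<length cs])"
      and p: "p < length (sd side (map (\<lambda>c. lab_seq T (a @ [c]) (concl (cs ! c))) [0..<length cs] ! c))"
      and u: "up r c side p = Some (side', p', pre)"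
    have c': "c < length cs" using c by simp
    have p2: "p < length (sd side (concl (cs ! c)))" using p c' by simp
    have pl: "p < length (sd side (map concl cs ! c))" using p2 c' by simp
    have p': "p' < length (sd side' s)" and e: "subfm (sd side' s ! p') pre = Some (sd side (concl (cs ! c)) ! p)"
      using match_nthD[OF m _ pl u] m c' pl u unfolding match_def by auto
    show "p' < length (sd side' (lab_seq T a s)) \<and>
       lsubfm (sd side' (lab_seq T a s) ! p') pre =
       Some (sd side (map (\<lambda>c. lab_seq T (a @ [c]) (concl (cs ! c))) [0..<length cs] ! c) ! p)"
      using p' e key[OF c' p2 u refl] c' p2 by (simp add: lsubfm_relabel)
  next
    fix A j k
    assume r: "r = Cut A j k" and l2: "length (map (\<lambda>c. lab_seq T (a @ [c]) (concl (cs ! c))) [0..<length cs]) = 2"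
    then have l2': "length cs = 2" by simp
    have h: "j < length (snd (concl (cs ! 0)))" "k < length (fst (concl (cs ! 1)))"
      "snd (concl (cs ! 0)) ! j = fst (concl (cs ! 1)) ! k"
      using m r l2' unfolding match_def by auto
    define Y where "Y = snd (concl (cs ! 0)) ! j"
    have "relabel (\<lambda>q. family T (a @ [0], True, j, q)) Y = relabel (\<lambda>q. family T (a @ [1], False, k, q)) Y"
    proof (rule relabel_cong)
      fix q B assume qB: "subfm Y q = Some (Box B)"
      have st0: "subtree T (a @ [0]) = Some (cs ! 0)" using st l2' by (simp add: subtree_append)
      have st1: "subtree T (a @ [1]) = Some (cs ! 1)" using st l2' by (simp add: subtree_append)
      have o1: "is_occ T (a @ [0], True, j, q)" using st0 h qB Y_def by (simp add: is_occ_def fm_at_simp sd_def)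
      have o2: "is_occ T (a @ [1], False, k, q)" using st1 h qB Y_def by (simp add: is_occ_def fm_at_simp sd_def)
      have "dcorr T (a @ [0], True, j, q) (a @ [1], False, k, q)"
        unfolding dcorr_def using o1 o2 st r l2' by blast
      then have "corr T (a @ [0], True, j, q) (a @ [1], False, k, q)" by (simp add: corr_def r_into_rtranclp)
      then show "family T (a @ [0], True, j, q) = family T (a @ [1], False, k, q)" using family_corr by metis
    qed
    then show "j < length (snd (map (\<lambda>c. lab_seq T (a @ [c]) (concl (cs ! c))) [0..<length cs] ! 0)) \<and>
       k < length (fst (map (\<lambda>c. lab_seq T (a @ [c]) (concl (cs ! c))) [0..<length cs] ! 1)) \<and>
       snd (map (\<lambda>c. lab_seq T (a @ [c]) (concl (cs ! c))) [0..<length cs] ! 0) ! j =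
       fst (map (\<lambda>c. lab_seq T (a @ [c]) (concl (cs ! c))) [0..<length cs] ! 1) ! k"
      using h l2' Y_def by (simp add: lab_seq_def)
  qed
qed

lemma step1_box:
  assumes v: "valid b T" and st: "subtree T a = Some (Node r s cs)"
  shows "boxcond ((prehist T)\<^sup>+\<^sup>+) r (lab_seq T a s) (map (\<lambda>c. lab_seq T (a @ [c]) (concl (cs ! c))) [0..<length cs])"
  unfolding boxcond_def
proof (intro allI impI)
  fix ss i l A
  assume r: "r = BoxR ss i" and e: "snd (lab_seq T a s) ! i = LBox l A"
  obtain L R where s: "s = (L, R)" by (cases s)
  have "step_ok r s (map concl cs)" using valid_sub[OF v st] by simp
  then obtain A0 where h: "i < length R" "R ! i = Box A0" "map concl cs = [(map (nth L) ss, [A0])]"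
    using r s by auto
  have c0: "cs \<noteq> []" "concl (cs ! 0) = (map (nth L) ss, [A0])" using h(3) by (cases cs; auto)+
  have l: "l = family T (a, True, i, [])" using e h s by (simp add: lab_seq_def)
  have stc: "subtree T (a @ [0]) = Some (cs ! 0)" using st c0 by (simp add: subtree_append)
  have boxG: "box_occ T (a, True, i, [])" using st h s by (simp add: box_occ_def fm_at_simp sd_def)
  show "\<forall>x\<in>set (fst (map (\<lambda>c. lab_seq T (a @ [c]) (concl (cs ! c))) [0..<length cs] ! 0)) \<union>
             set (snd (map (\<lambda>c. lab_seq T (a @ [c]) (concl (cs ! c))) [0..<length cs] ! 0)).
          \<forall>m\<in>labs x. (prehist T)\<^sup>+\<^sup>+ m l"
  proof (intro ballI)
    fix x m
    assume x: "x \<in> set (fst (map (\<lambda>c. lab_seq T (a @ [c]) (concl (cs ! c))) [0..<length cs] ! 0)) \<union>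
             set (snd (map (\<lambda>c. lab_seq T (a @ [c]) (concl (cs ! c))) [0..<length cs] ! 0))"
      and m: "m \<in> labs x"
    have "\<exists>side. x \<in> set (sd side (lab_seq T (a @ [0]) (concl (cs ! 0))))"
      using x c0(1) by (auto simp: sd_def)
    then obtain side where "x \<in> set (lab_list T (a @ [0]) side (sd side (concl (cs ! 0))))" by auto
    then obtain p where p: "p < length (sd side (concl (cs ! 0)))"
      "x = relabel (\<lambda>q. family T (a @ [0], side, p, q)) (sd side (concl (cs ! 0)) ! p)"
      by (auto simp: in_set_conv_nth)
    obtain q B where qB: "subfm (sd side (concl (cs ! 0)) ! p) q = Some (Box B)" "m = family T (a @ [0], side, p, q)"
      using labs_relabel[OF m[unfolded p(2)]] by blast
    have boxF: "box_occ T (a @ [0], side, p, q)" using stc p(1) qB(1) by (simp add: box_occ_def fm_at_simp)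
    have "prehist T m l"
      unfolding prehist_def
    proof (intro conjI)
      show "m \<in> families T" using boxF qB(2) by (auto simp: families_def)
      show "l \<in> families T" using boxG l by (auto simp: families_def)
      show "\<exists>a ss i s cs oc. subtree T a = Some (Node (BoxR ss i) s cs) \<and> (a, True, i, []) \<in> l \<and>
          box_occ T oc \<and> fst oc = a @ [0] \<and> oc \<in> m"
        apply (rule exI[of _ a], rule exI[of _ ss], rule exI[of _ i], rule exI[of _ s], rule exI[of _ cs],
            rule exI[of _ "(a @ [0], side, p, q)"])
        using st r boxG boxF l qB(2) by (auto simp: family_def corr_def)
    qed
    then show "(prehist T)\<^sup>+\<^sup>+ m l" by (rule tranclp.r_into_trancl)
  qed
qed

lemma step1_hder:
  assumes v: "valid True T"
  shows "subtree T a = Some t \<Longrightarrow> valid False t \<Longrightarrow>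
     \<exists>n. hder ((prehist T)\<^sup>+\<^sup>+) n (mset (fst (lab_seq T a (concl t)))) (mset (snd (lab_seq T a (concl t))))"
proof (induction t arbitrary: a)
  case (Node r s cs)
  let ?ps = "map (\<lambda>c. lab_seq T (a @ [c]) (concl (cs ! c))) [0..<length cs]"
  have ih: "\<forall>p\<in>set ?ps. \<exists>n. hder ((prehist T)\<^sup>+\<^sup>+) n (mset (fst p)) (mset (snd p))"
  proof
    fix p assume "p \<in> set ?ps"
    then obtain c where c: "c < length cs" "p = lab_seq T (a @ [c]) (concl (cs ! c))" by auto
    have "subtree T (a @ [c]) = Some (cs ! c)" using Node.prems(1) c by (simp add: subtree_append)
    moreover have "valid False (cs ! c)" using Node.prems(2) c by (simp add: list_all_length)
    ultimately show "\<exists>n. hder ((prehist T)\<^sup>+\<^sup>+) n (mset (fst p)) (mset (snd p))"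
      using Node.IH[of "cs ! c"] c by auto
  qed
  have m: "match lsubfm r (lab_seq T a s) ?ps" by (rule step1_match[OF v Node.prems(1)])
  have "map ers ?ps = map concl cs" by (rule nth_equalityI) simp_all
  then have so: "step_ok r (ers (lab_seq T a s)) (map ers ?ps)" using Node.prems(2) by simp
  have sh: "lshape r (lab_seq T a s) ?ps" by (rule B[OF so m])
  have bc: "boxcond ((prehist T)\<^sup>+\<^sup>+) r (lab_seq T a s) ?ps" by (rule step1_box[OF v Node.prems(1)])
  have "\<not> is_cut r" using Node.prems(2) by simp
  from D[OF sh this bc ih] show ?case by simp
qed

lemma tranclp_path: "R\<^sup>+\<^sup>+ x y \<Longrightarrow> \<exists>fs. fs \<noteq> [] \<and> fs ! 0 = x \<and> (\<forall>n. Suc n < length fs \<longrightarrow> R (fs ! n) (fs ! Suc n))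
   \<and> R (last fs) y"
proof (induction rule: tranclp_induct)
  case (base y) then show ?case by (intro exI[of _ "[x]"]) auto
next
  case (step y z)
  then obtain fs where fs: "fs \<noteq> []" "fs ! 0 = x" "\<forall>n. Suc n < length fs \<longrightarrow> R (fs ! n) (fs ! Suc n)" "R (last fs) y"
    by blast
  have "\<forall>n. Suc n < length (fs @ [y]) \<longrightarrow> R ((fs @ [y]) ! n) ((fs @ [y]) ! Suc n)"
  proof (intro allI impI)
    fix n assume n: "Suc n < length (fs @ [y])"
    show "R ((fs @ [y]) ! n) ((fs @ [y]) ! Suc n)"
    proof (cases "Suc n < length fs")
      case True then show ?thesis using fs(3) by (simp add: nth_append)
    next
      case False
      then have "n = length fs - 1" using n by simp
      then show ?thesis using fs(1,4) by (simp add: nth_append last_conv_nth)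
    qed
  qed
  then show ?case using fs step(2) by (intro exI[of _ "fs @ [y]"]) (auto simp: nth_append)
qed

lemma tranclp_cycle: "R\<^sup>+\<^sup>+ x x \<Longrightarrow> \<exists>fs. fs \<noteq> [] \<and> (\<forall>n<length fs. R (fs ! n) (fs ! ((n + 1) mod length fs)))"
proof -
  assume "R\<^sup>+\<^sup>+ x x"
  from tranclp_path[OF this] obtain fs where fs: "fs \<noteq> []" "fs ! 0 = x"
    "\<forall>n. Suc n < length fs \<longrightarrow> R (fs ! n) (fs ! Suc n)" "R (last fs) x" by blast
  have "\<forall>n<length fs. R (fs ! n) (fs ! ((n + 1) mod length fs))"
  proof (intro allI impI)
    fix n assume n: "n < length fs"
    show "R (fs ! n) (fs ! ((n + 1) mod length fs))"
    proof (cases "Suc n < length fs")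
      case True then show ?thesis using fs(3) by simp
    next
      case False
      then have "n = length fs - 1" using n by simp
      then show ?thesis using fs(1,2,4) by (simp add: last_conv_nth)
    qed
  qed
  then show ?thesis using fs(1) by blast
qed

theorem mainTheorem4:
  fixes \<Gamma> \<Delta> :: "'a fm multiset" and A :: "'a fm"
    and TL TR T :: "'a ptree" and L R :: "'a fm list" and j k :: nat
  assumes "mset L = \<Gamma>" and "mset R = \<Delta>"
    and "valid False TL" and "seq_mset (concl TL) = (\<Gamma>, \<Delta> + {#A#})"
    and "valid False TR" and "seq_mset (concl TR) = (\<Gamma> + {#A#}, \<Delta>)"
    and "T = Node (Cut A j k) (L, R) [TL, TR]"
    and "valid True T"
    and "prehist_cycle_free T"
  shows "\<exists>T'. valid False T' \<and> seq_mset (concl T') = (\<Gamma>, \<Delta>) \<and> prehist_cycle_free T'"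
proof -
  note TT = assms(7)
  define rel where "rel = (prehist T)\<^sup>+\<^sup>+"
  have tr: "transp rel" unfolding rel_def by (auto simp: transp_def intro: tranclp_trans)
  have irr: "\<not> rel x x" for x
  proof
    assume "rel x x"
    then have "(prehist T)\<^sup>+\<^sup>+ x x" unfolding rel_def .
    from tranclp_cycle[OF this] obtain fs where "fs \<noteq> []" "\<forall>n<length fs. prehist T (fs ! n) (fs ! ((n + 1) mod length fs))"
      by blast
    then show False using assms(9) unfolding prehist_cycle_free_def by blast
  qed
  define ps where "ps = map (\<lambda>c. lab_seq T ([] @ [c]) (concl ([TL, TR] ! c))) [0..<length [TL, TR]]"
  have pseq: "ps = [lab_seq T [0] (concl TL), lab_seq T [1] (concl TR)]"
    unfolding ps_def by (simp add: numeral_2_eq_2)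
  have st0: "subtree T [] = Some (Node (Cut A j k) (L, R) [TL, TR])" using TT by simp
  have m: "match lsubfm (Cut A j k) (lab_seq T [] (L, R)) ps" unfolding ps_def by (rule step1_match[OF assms(8) st0])
  have so0: "step_ok (Cut A j k) (L, R) [concl TL, concl TR]" using assms(8) unfolding TT by simp
  have "map ers ps = [concl TL, concl TR]" unfolding pseq by simp
  then have so: "step_ok (Cut A j k) (ers (lab_seq T [] (L, R))) (map ers ps)" using so0 by simp
  have sh: "lshape (Cut A j k) (lab_seq T [] (L, R)) ps" by (rule B[OF so m])
  obtain L' R' where LR': "lab_seq T [] (L, R) = (L', R')" by (cases "lab_seq T [] (L, R)")
  have sh': "lshape (Cut A j k) (L', R') ps" using sh unfolding LR' .
  then obtain A' where A': "ps = [(L', ins j A' R'), (ins k A' L', R')]" by auto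
  have ps0: "lab_seq T [0] (concl TL) = (L', ins j A' R')" and ps1: "lab_seq T [1] (concl TR) = (ins k A' L', R')"
    using A' unfolding pseq by simp_all
  have stL: "subtree T [0] = Some TL" using TT by simp
  have stR: "subtree T [1] = Some TR" using TT by simp
  obtain n1 where n1: "hder rel n1 (mset L') (add_mset A' (mset R'))"
    using step1_hder[OF assms(8) stL assms(3)] unfolding ps0 rel_def by auto
  obtain n2 where n2: "hder rel n2 (add_mset A' (mset L')) (mset R')"
    using step1_hder[OF assms(8) stR assms(5)] unfolding ps1 rel_def by auto
  obtain n where n: "hder rel n (mset L') (mset R')" using cut_adm[OF tr n1 n2] by blast
  obtain lt where lt: "lvalid rel lt" "lconcl lt = (L', R')" using F[OF n refl refl] by blast
  have "valid False (erase lt)" by (rule valid_erase[OF lt(1)])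
  moreover have "concl (erase lt) = (L, R)"
  proof -
    have "ers (lab_seq T [] (L, R)) = (L, R)" by (rule ers_lab_seq)
    then show ?thesis using lt(2) LR' by simp
  qed
  moreover have "prehist_cycle_free (erase lt)" by (rule erase_cycle_free[OF lt(1) tr irr])
  ultimately show ?thesis using assms(1,2) by (intro exI[of _ "erase lt"]) (auto simp: seq_mset_def)
qed

end
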